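(* Let $L$ be an $r\times m$ matrix of integers of full rank $r$. There exist $K_L>0$ and $p_0$ depending only on $L$ such that for every prime $p\ge p_0$ and all $p$-measurable sets $A_1,\ldots,A_m\subset\mathbb{T}$, there exist $j_1/p,\ldots,j_K/p\in J(L,p)$ with $K\le K_L$ such that \[S_{L,\mathbb{T}}(A_1,\ldots,A_m)=\sum_{k=1}^{K}\lambda_k\,S_{L,\mathbb{Z}_p}\big(A_1'-j_k(1),\ldots,A_m'-j_k(m)\big),\] where $\lambda_k=p^{m-r}\mu_{L,\mathbb{T}}\big((j_k/p+[0,1/p)^m)\cap\ker_{\mathbb{T}}L\big)$.
   Context: $\mathbb{T}=\mathbb{R}/\mathbb{Z}$, and $\mathbb{T}^m$ is identified with $[0,1)^m$ with coordinatewise addition mod 1. A set $A\subset\mathbb{T}$ is $p$-measurable if it is a union of intervals $[(x-1)/p,x/p)$, $x\in\{1,\ldots,p\}$. For a $p$-measurable $A$, $A'\subset\mathbb{Z}_p$ is defined by $1_{A'}(x)=1_A(x/p)$ (identifying $x\in\mathbb{Z}_p$ with $\{0,\ldots,p-1\}$). For a compact abelian group $G$, $\ker_G L=\{x\in G^m:Lx=0\}$ with normalized Haar probability measure $\mu_{L,G}$, and $S_{L,G}(B_1,\ldots,B_m)=\mu_{L,G}\big((B_1\times\cdots\times B_m)\cap\ker_G L\big)$; for $G=\mathbb{Z}_p$ this is the proportion of elements of $\ker_{\mathbb{Z}_p}L$ lying in $B_1\times\cdots\times B_m$. For $j\in\mathbb{Z}_p^m$ with coordinates $j(i)\in\{0,\ldots,p-1\}$,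 $j/p=(j(1)/p,\ldots,j(m)/p)\in\mathbb{T}^m$; $\Lambda=\{j/p:j\in\mathbb{Z}_p^m\}$ and $J(L,p)=\{j/p\in\Lambda:\ \mu_{L,\mathbb{T}}\big((j/p+[0,1/p)^m)\cap\ker_{\mathbb{T}}L\big)>0\}$. *)

theory Defs
  imports "HOL-Analysis.Analysis" "HOL-Computational_Algebra.Primes"
begin

text \<open>The torus T^m, identified with [0,1)^m inside real^'m, with coordinatewise addition mod 1.\<close>
definition torus :: "(real^'m) set" where
  "torus = {x. \<forall>i. 0 \<le> x$i \<and> x$i < 1}"

definition tadd :: "real^'m \<Rightarrow> real^'m \<Rightarrow> real^'m" where
  "tadd x y = (\<chi> i. frac (x$i + y$i))"

definition kerT :: "int^'m^'r \<Rightarrow> (real^'m) set" where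
  "kerT L = {x \<in> torus. \<forall>k. (\<Sum>i\<in>UNIV. real_of_int (L$k$i) * x$i) \<in> \<int>}"

definition is_haar_kerT :: "int^'m^'r \<Rightarrow> (real^'m) measure \<Rightarrow> bool" where
  "is_haar_kerT L M \<longleftrightarrow> space M = kerT L \<and> sets M = sets (restrict_space borel (kerT L))
     \<and> emeasure M (kerT L) = 1
     \<and> (\<forall>a\<in>kerT L. \<forall>B\<in>sets M. emeasure M (tadd a ` B) = emeasure M B)"

definition haarT :: "int^'m^'r \<Rightarrow> (real^'m) measure" where
  "haarT L = (THE M. is_haar_kerT L M)"

definition muT :: "int^'m^'r \<Rightarrow> (real^'m) set \<Rightarrow> real" where
  "muT L S = measure (haarT L) (S \<inter> kerT L)"

definition S_T :: "int^'m^'r \<Rightarrow> ('m \<Rightarrow> real set) \<Rightarrow> real" where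
  "S_T L A = muT L {x. \<forall>i. x$i \<in> A i}"

definition p_measurable :: "nat \<Rightarrow> real set \<Rightarrow> bool" where
  "p_measurable p A \<longleftrightarrow> (\<exists>X \<subseteq> {1..p}. A = (\<Union>x\<in>X. {real (x - 1) / real p ..< real x / real p}))"

definition prime_set :: "nat \<Rightarrow> real set \<Rightarrow> int set" where
  "prime_set p A = {x. 0 \<le> x \<and> x < int p \<and> real_of_int x / real p \<in> A}"

definition shiftZ :: "nat \<Rightarrow> int set \<Rightarrow> int \<Rightarrow> int set" where
  "shiftZ p B c = {y. 0 \<le> y \<and> y < int p \<and> (y + c) mod int p \<in> B}"

text \<open>ker_{Z_p} L, elements of Z_p^m represented by 'm \<Rightarrow> int with values in {0..p-1}.\<close>
definition kerZp :: "int^'m^'r \<Rightarrow> nat \<Rightarrow> ('m \<Rightarrow> int) set" where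
  "kerZp L p = {x. (\<forall>i. 0 \<le> x i \<and> x i < int p) \<and> (\<forall>k. (\<Sum>i\<in>UNIV. L$k$i * x i) mod int p = 0)}"

definition S_Zp :: "int^'m^'r \<Rightarrow> nat \<Rightarrow> ('m \<Rightarrow> int set) \<Rightarrow> real" where
  "S_Zp L p B = real (card (kerZp L p \<inter> {x. \<forall>i. x i \<in> B i})) / real (card (kerZp L p))"

definition pbox :: "nat \<Rightarrow> ('m \<Rightarrow> int) \<Rightarrow> (real^'m) set" where
  "pbox p j = {x. \<forall>i. real_of_int (j i) / real p \<le> x$i \<and> x$i < real_of_int (j i) / real p + 1 / real p}"

text \<open>J(L,p), represented by the index vectors j (j/p is the point of Lambda).\<close>
definition Jset :: "int^'m^'r \<Rightarrow> nat \<Rightarrow> ('m \<Rightarrow> int) set" where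
  "Jset L p = {j. (\<forall>i. 0 \<le> j i \<and> j i < int p) \<and> muT L (pbox p j) > 0}"

definition lam :: "int^'m^'r \<Rightarrow> nat \<Rightarrow> ('m \<Rightarrow> int) \<Rightarrow> real" where
  "lam L p j = real p ^ (CARD('m) - CARD('r)) * muT L (pbox p j)"

end

theory Submission
  imports Defs
begin

definition tneg :: "real^'m \<Rightarrow> real^'m" where
  "tneg y = (\<chi> i. frac (- (y$i)))"

lemma frac_eq_iff_Ints: "frac x = frac y \<longleftrightarrow> x - y \<in> \<int>"
proof
  assume "frac x = frac y"
  then have "x - y = of_int (\<lfloor>x\<rfloor> - \<lfloor>y\<rfloor>)" by (simp add: frac_def)
  then show "x - y \<in> \<int>" by simp
next
  assume "x - y \<in> \<int>"
  then obtain k where k: "x - y = of_int k" by (auto elim: Ints_cases)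
  then have "x = y + of_int k" by simp
  then show "frac x = frac y" by (simp add: frac_def)
qed

lemma frac_frac_add: "frac (frac x + y) = frac (x + y)"
  unfolding frac_eq_iff_Ints by (simp add: frac_def)

lemma frac_add_frac: "frac (x + frac y) = frac (x + y)"
  unfolding frac_eq_iff_Ints by (simp add: frac_def)

lemma tadd_nth: "tadd a x $ i = frac (a$i + x$i)"
  by (simp add: tadd_def)

lemma tneg_nth: "tneg a $ i = frac (- (a$i))"
  by (simp add: tneg_def)

lemma in_torus: "x \<in> torus \<longleftrightarrow> (\<forall>i. 0 \<le> x$i \<and> x$i < 1)"
  by (simp add: torus_def)

lemma tadd_torus[simp]: "tadd a x \<in> torus"
  by (simp add: in_torus tadd_nth frac_lt_1)

lemma tneg_torus[simp]: "tneg a \<in> torus"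
  by (simp add: in_torus tneg_nth frac_lt_1)

lemma tadd_comm: "tadd a x = tadd x a"
  by (simp add: tadd_def add.commute)

lemma tadd_assoc: "tadd (tadd a b) c = tadd a (tadd b c)"
  by (simp add: vec_eq_iff tadd_nth frac_frac_add frac_add_frac add.assoc)

lemma frac_torus: "x \<in> torus \<Longrightarrow> frac (x$i) = x$i"
  by (simp add: in_torus frac_eq)

lemma tneg_tadd: "x \<in> torus \<Longrightarrow> tadd (tneg a) (tadd a x) = x"
  by (simp add: vec_eq_iff tadd_nth tneg_nth frac_frac_add frac_add_frac frac_torus)

lemma tadd_tneg: "x \<in> torus \<Longrightarrow> tadd a (tadd (tneg a) x) = x"
  by (simp add: vec_eq_iff tadd_nth tneg_nth frac_frac_add frac_add_frac frac_torus)

lemma int_comb_frac: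
  fixes c :: "'i \<Rightarrow> int"
  shows "(\<Sum>i\<in>I. real_of_int (c i) * frac (u i)) - (\<Sum>i\<in>I. real_of_int (c i) * u i) \<in> \<int>"
proof -
  have "(\<Sum>i\<in>I. real_of_int (c i) * frac (u i)) - (\<Sum>i\<in>I. real_of_int (c i) * u i)
      = - (\<Sum>i\<in>I. real_of_int (c i * \<lfloor>u i\<rfloor>))"
    by (simp add: frac_def sum_subtractf[symmetric] right_diff_distrib sum_negf[symmetric])
  also have "\<dots> \<in> \<int>" by (intro Ints_minus Ints_sum) simp
  finally show ?thesis .
qed

lemma kerT_iff: "x \<in> kerT L \<longleftrightarrow> x \<in> torus \<and> (\<forall>k. (\<Sum>i\<in>UNIV. real_of_int (L$k$i) * x$i) \<in> \<int>)"
  by (simp add: kerT_def)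

lemma Ints_diff_iff: assumes "(a::real) - b \<in> \<int>" shows "a \<in> \<int> \<longleftrightarrow> b \<in> \<int>"
proof
  assume "a \<in> \<int>"
  then have "a - (a - b) \<in> \<int>" using assms by (rule Ints_diff)
  then show "b \<in> \<int>" by simp
next
  assume "b \<in> \<int>"
  then have "(a - b) + b \<in> \<int>" using assms by (intro Ints_add)
  then show "a \<in> \<int>" by simp
qed

lemma tadd_kerT: "a \<in> kerT L \<Longrightarrow> x \<in> kerT L \<Longrightarrow> tadd a x \<in> kerT L"
proof -
  assume a: "a \<in> kerT L" and x: "x \<in> kerT L"
  show ?thesis unfolding kerT_iff
  proof (intro conjI allI)
    fix k
    have 1: "(\<Sum>i\<in>UNIV. real_of_int (L$k$i) * tadd a x$i) - (\<Sum>i\<in>UNIV. real_of_int (L$k$i) * (a$i + x$i)) \<in> \<int>"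
      unfolding tadd_nth by (rule int_comb_frac)
    have "(\<Sum>i\<in>UNIV. real_of_int (L$k$i) * (a$i + x$i)) = (\<Sum>i\<in>UNIV. real_of_int (L$k$i) * a$i) + (\<Sum>i\<in>UNIV. real_of_int (L$k$i) * x$i)"
      by (simp add: distrib_left sum.distrib)
    also have "\<dots> \<in> \<int>" using a x by (auto simp: kerT_iff)
    finally show "(\<Sum>i\<in>UNIV. real_of_int (L$k$i) * tadd a x$i) \<in> \<int>" using Ints_diff_iff[OF 1] by simp
  qed simp
qed

lemma tneg_kerT: "a \<in> kerT L \<Longrightarrow> tneg a \<in> kerT L"
proof -
  assume a: "a \<in> kerT L"
  show ?thesis unfolding kerT_iff
  proof (intro conjI allI)
    fix k
    have 1: "(\<Sum>i\<in>UNIV. real_of_int (L$k$i) * tneg a$i) - (\<Sum>i\<in>UNIV. real_of_int (L$k$i) * (- a$i)) \<in> \<int>"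
      unfolding tneg_nth by (rule int_comb_frac)
    have "(\<Sum>i\<in>UNIV. real_of_int (L$k$i) * (- a$i)) = - (\<Sum>i\<in>UNIV. real_of_int (L$k$i) * a$i)"
      by (simp add: sum_negf[symmetric])
    also have "\<dots> \<in> \<int>" using a by (auto simp: kerT_iff)
    finally show "(\<Sum>i\<in>UNIV. real_of_int (L$k$i) * tneg a$i) \<in> \<int>" using Ints_diff_iff[OF 1] by simp
  qed simp
qed

lemma kerT_torus: "kerT L \<subseteq> torus" by (auto simp: kerT_def)

lemma tadd_image: "B \<subseteq> torus \<Longrightarrow> tadd a ` B = {y \<in> torus. tadd (tneg a) y \<in> B}"
proof (safe)
  fix b assume "B \<subseteq> torus" "b \<in> B"
  then show "tadd (tneg a) (tadd a b) \<in> B" using tneg_tadd[of b a] by auto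
next
  fix y assume "y \<in> torus" "tadd (tneg a) y \<in> B"
  then show "y \<in> tadd a ` B" using tadd_tneg[of y a] by (metis image_eqI)
qed simp


lemma vec_borel_measurableI:
  fixes f :: "'a \<Rightarrow> real^'n"
  assumes "\<And>i. (\<lambda>x. f x $ i) \<in> borel_measurable M"
  shows "f \<in> borel_measurable M"
proof (rule iffD2[OF borel_measurable_euclidean_space], rule ballI)
  fix b :: "real^'n" assume "b \<in> Basis"
  then obtain j where "b = axis j 1" by (auto simp: Basis_vec_def)
  then have "(\<lambda>x. f x \<bullet> b) = (\<lambda>x. f x $ j)" by (simp add: inner_axis)
  then show "(\<lambda>x. f x \<bullet> b) \<in> borel_measurable M" using assms by simp
qed
lemma vec_nth_borel[measurable]: "(\<lambda>x::real^'n. x $ i) \<in> borel_measurable borel"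
  by (intro borel_measurable_continuous_onI continuous_intros)

lemma frac_borel[measurable]: "(\<lambda>x::real. frac x) \<in> borel_measurable borel"
  unfolding frac_def by measurable

lemma tadd_measurable2:
  assumes "(\<lambda>x. f x) \<in> borel_measurable M" "(\<lambda>x. g x) \<in> borel_measurable M"
  shows "(\<lambda>x. tadd (f x) (g x) :: real^'n) \<in> borel_measurable M"
proof (rule vec_borel_measurableI)
  fix i
  have "(\<lambda>x. f x $ i) \<in> borel_measurable M" using assms(1) by measurable
  moreover have "(\<lambda>x. g x $ i) \<in> borel_measurable M" using assms(2) by measurable
  ultimately show "(\<lambda>x. tadd (f x) (g x) $ i) \<in> borel_measurable M"
    unfolding tadd_nth by measurable
qed

lemma tadd_measurable: "(\<lambda>x. tadd a x :: real^'n) \<in> borel_measurable borel"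
  by (rule tadd_measurable2) auto

lemma torus_borel: "(torus :: (real^'n) set) \<in> sets borel"
proof -
  have "torus = (\<Inter>i. {x::real^'n. 0 \<le> x$i} \<inter> {x. x$i < 1})"
    by (auto simp: torus_def)
  also have "\<dots> \<in> sets borel" by measurable
  finally show ?thesis .
qed

lemma Ints_borel: "(\<int> :: real set) \<in> sets borel"
proof -
  have "\<int> = (\<Union>k. {real_of_int k})" by (auto elim: Ints_cases)
  also have "\<dots> \<in> sets borel" by measurable
  finally show ?thesis .
qed

lemma kerT_borel: "kerT L \<in> sets borel"
proof -
  have "kerT L = torus \<inter> (\<Inter>k. (\<lambda>x. \<Sum>i\<in>UNIV. real_of_int (L$k$i) * x$i) -` \<int>)"
    by (auto simp: kerT_def)
  also have "\<dots> \<in> sets borel"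
  proof (intro sets.Int torus_borel sets.finite_INT ballI)
    fix k
    have "(\<lambda>x::real^'a. \<Sum>i\<in>UNIV. real_of_int (L$k$i) * x$i) \<in> borel_measurable borel" by measurable
    from measurable_sets[OF this Ints_borel] show "(\<lambda>x. \<Sum>i\<in>UNIV. real_of_int (L$k$i) * x$i) -` \<int> \<in> sets borel" by simp
  qed simp_all
  finally show ?thesis .
qed

lemma sets_haar: "B \<in> sets (restrict_space borel (kerT L)) \<longleftrightarrow> B \<subseteq> kerT L \<and> B \<in> sets borel"
  by (rule sets_restrict_space_iff) (simp add: kerT_borel)

lemma tneg_tneg: "x \<in> torus \<Longrightarrow> tneg (tneg x) = x"
proof -
  assume x: "x \<in> torus"
  have "frac (- frac (- (x$i))) = x$i" for i
  proof -
    have "frac (- frac (- (x$i))) = frac (x$i)"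
      unfolding frac_eq_iff_Ints by (simp add: frac_def)
    then show ?thesis using frac_torus[OF x] by simp
  qed
  then show ?thesis by (simp add: vec_eq_iff tneg_nth)
qed

lemma preim_tadd:
  assumes x: "x \<in> kerT L" and B: "B \<subseteq> kerT L"
  shows "(\<lambda>y. tadd x y) -` B \<inter> kerT L = tadd (tneg x) ` B"
proof -
  have xt: "x \<in> torus" using x kerT_torus by auto
  have "tadd (tneg x) ` B = {y \<in> torus. tadd x y \<in> B}"
    using tadd_image[of B "tneg x"] B kerT_torus tneg_tneg[OF xt] by auto
  moreover have "y \<in> kerT L" if "y \<in> torus" "tadd x y \<in> B" for y
  proof -
    have "tadd (tneg x) (tadd x y) \<in> kerT L"
      by (rule tadd_kerT[OF tneg_kerT[OF x]]) (use that B in auto)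
    then show ?thesis using tneg_tadd[of y x] \<open>y \<in> torus\<close> by simp
  qed
  ultimately show ?thesis using kerT_torus by auto
qed

lemma tadd_image_sets:
  assumes "is_haar_kerT L M" "a \<in> kerT L" "B \<in> sets M"
  shows "tadd a ` B \<in> sets M"
proof -
  have B: "B \<subseteq> kerT L" "B \<in> sets borel" using assms sets_haar by (auto simp: is_haar_kerT_def)
  have "tneg (tneg a) = a" using tneg_tneg assms(2) kerT_torus by auto
  then have e: "tadd a ` B = (\<lambda>y. tadd (tneg a) y) -` B \<inter> kerT L"
    using preim_tadd[OF tneg_kerT[OF assms(2)] B(1)] by simp
  have "(\<lambda>y. tadd (tneg a) y) -` B \<inter> kerT L \<in> sets borel"
    using measurable_sets[OF tadd_measurable B(2)] kerT_borel by auto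
  then show ?thesis using assms e B(1) sets_haar unfolding is_haar_kerT_def
    by (auto simp: e)
qed

lemma haar_fin: "is_haar_kerT L M \<Longrightarrow> finite_measure M"
  by (rule finite_measureI) (simp add: is_haar_kerT_def)

lemma haar_space1: "is_haar_kerT L M \<Longrightarrow> emeasure M (space M) = 1"
  by (simp add: is_haar_kerT_def)

lemma haar_inner:
  assumes H: "is_haar_kerT L M" and x: "x \<in> kerT L" and B: "B \<in> sets M"
  shows "(\<integral>\<^sup>+ y. indicator B (tadd x y) \<partial>M) = emeasure M B"
proof -
  have sp: "space M = kerT L" using H by (simp add: is_haar_kerT_def)
  have Bk: "B \<subseteq> kerT L" using B sets.sets_into_space sp by blast
  have "(\<integral>\<^sup>+ y. indicator B (tadd x y) \<partial>M) = (\<integral>\<^sup>+ y. indicator (tadd (tneg x) ` B) y \<partial>M)"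
  proof (rule nn_integral_cong)
    fix y assume "y \<in> space M"
    then show "indicator B (tadd x y) = (indicator (tadd (tneg x) ` B) y :: ennreal)"
      using preim_tadd[OF x Bk] sp by (auto simp: indicator_def)
  qed
  also have "\<dots> = emeasure M (tadd (tneg x) ` B)"
    by (rule nn_integral_indicator) (rule tadd_image_sets[OF H tneg_kerT[OF x] B])
  also have "\<dots> = emeasure M B" using H tneg_kerT[OF x] B by (simp add: is_haar_kerT_def)
  finally show ?thesis .
qed

lemma haar_ident:
  fixes L :: "int^'m^'r" and M :: "(real^'m) measure"
  assumes "is_haar_kerT L M"
  shows "(\<lambda>x. x) \<in> borel_measurable M"
proof -
  have "(\<lambda>x. x) \<in> measurable (restrict_space borel (kerT L)) borel"
    by (rule measurable_restrict_space1) simp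
  moreover have "measurable M (borel :: (real^'m) measure) = measurable (restrict_space borel (kerT L)) borel"
    by (rule measurable_cong_sets) (use assms in \<open>auto simp: is_haar_kerT_def\<close>)
  ultimately show ?thesis by (simp only:)
qed

lemma haar_unique:
  assumes HM: "is_haar_kerT L M" and HN: "is_haar_kerT L N"
  shows "M = N"
proof (rule measure_eqI)
  show ss: "sets M = sets N" using HM HN by (simp add: is_haar_kerT_def)
  fix B assume B: "B \<in> sets M"
  then have BN: "B \<in> sets N" using ss by simp
  interpret M: finite_measure M by (rule haar_fin[OF HM])
  interpret N: finite_measure N by (rule haar_fin[OF HN])
  interpret P: pair_sigma_finite M N by unfold_locales
  have spM: "space M = kerT L" using HM by (simp add: is_haar_kerT_def)
  have spN: "space N = kerT L" using HN by (simp add: is_haar_kerT_def)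
  have Bb: "B \<in> sets borel" using B HM sets_haar by (auto simp: is_haar_kerT_def)
  let ?f = "\<lambda>z. indicator B (tadd (fst z) (snd z)) :: ennreal"
  have fm: "?f \<in> borel_measurable (M \<Otimes>\<^sub>M N)"
  proof (rule measurable_compose[OF _ borel_measurable_indicator[OF Bb]])
    have "fst \<in> borel_measurable (M \<Otimes>\<^sub>M N)"
      by (rule measurable_compose[OF measurable_fst]) 
        (rule haar_ident[OF HM])
    moreover have "snd \<in> borel_measurable (M \<Otimes>\<^sub>M N)"
      by (rule measurable_compose[OF measurable_snd]) 
        (rule haar_ident[OF HN])
    ultimately show "(\<lambda>z. tadd (fst z) (snd z)) \<in> borel_measurable (M \<Otimes>\<^sub>M N)"
      by (rule tadd_measurable2)
  qed
  have "(\<integral>\<^sup>+ x. \<integral>\<^sup>+ y. ?f (x, y) \<partial>N \<partial>M) = (\<integral>\<^sup>+ y. \<integral>\<^sup>+ x. ?f (x, y) \<partial>M \<partial>N)"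
    using N.nn_integral_fst[OF fm] P.nn_integral_snd[OF fm] by simp
  moreover have "(\<integral>\<^sup>+ x. \<integral>\<^sup>+ y. ?f (x, y) \<partial>N \<partial>M) = emeasure N B"
  proof -
    have "(\<integral>\<^sup>+ x. \<integral>\<^sup>+ y. ?f (x, y) \<partial>N \<partial>M) = (\<integral>\<^sup>+ x. emeasure N B \<partial>M)"
      by (rule nn_integral_cong) (simp add: haar_inner[OF HN _ BN] spM)
    then show ?thesis by (simp add: haar_space1[OF HM])
  qed
  moreover have "(\<integral>\<^sup>+ y. \<integral>\<^sup>+ x. ?f (x, y) \<partial>M \<partial>N) = emeasure M B"
  proof -
    have "(\<integral>\<^sup>+ y. \<integral>\<^sup>+ x. ?f (x, y) \<partial>M \<partial>N) = (\<integral>\<^sup>+ y. emeasure M B \<partial>N)"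
      by (rule nn_integral_cong) (simp add: tadd_comm[of _ "_::real^_"] haar_inner[OF HM _ B] spN)
    then show ?thesis by (simp add: haar_space1[OF HN])
  qed
  ultimately show "emeasure M B = emeasure N B" by simp
qed

lemma haarT_eq: "is_haar_kerT L M \<Longrightarrow> haarT L = M"
  unfolding haarT_def using haar_unique by blast


definition intv :: "real^'n \<Rightarrow> bool" where "intv v \<longleftrightarrow> (\<forall>i. v$i \<in> \<int>)"
definition intm :: "real^'n^'m \<Rightarrow> bool" where "intm A \<longleftrightarrow> (\<forall>i j. A$i$j \<in> \<int>)"
definition vfrac :: "real^'n \<Rightarrow> real^'n" where "vfrac v = (\<chi> i. frac (v$i))"

lemma vfrac_nth: "vfrac v $ i = frac (v$i)" by (simp add: vfrac_def)

lemma intm_intv: "intm A \<Longrightarrow> intv v \<Longrightarrow> intv (A *v v)"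
  by (auto simp: intm_def intv_def matrix_vector_mult_def intro!: Ints_sum Ints_mult)

lemma intv_add: "intv u \<Longrightarrow> intv w \<Longrightarrow> intv (u + w)"
  by (auto simp: intv_def)
lemma intv_diff: "intv u \<Longrightarrow> intv w \<Longrightarrow> intv (u - w)"
  by (auto simp: intv_def)
lemma intv_minus: "intv u \<Longrightarrow> intv (- u)"
  by (auto simp: intv_def)
lemma intv_0: "intv 0" by (auto simp: intv_def)
lemma intv_scaleR: "c \<in> \<int> \<Longrightarrow> intv u \<Longrightarrow> intv (c *\<^sub>R u)"
  by (auto simp: intv_def)

lemma vfrac_eq_iff: "vfrac u = vfrac w \<longleftrightarrow> intv (u - w)"
  by (simp add: vec_eq_iff vfrac_nth intv_def frac_eq_iff_Ints)

lemma intv_vfrac: "intv (u - vfrac u)"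
  by (simp add: intv_def vfrac_nth frac_def)

lemma tadd_vfrac: "tadd a x = vfrac (a + x)"
  by (simp add: vec_eq_iff tadd_nth vfrac_nth)

lemma tneg_vfrac: "tneg a = vfrac (- a)"
  by (simp add: vec_eq_iff tneg_nth vfrac_nth)

lemma vfrac_torus[simp]: "vfrac u \<in> torus"
  by (simp add: in_torus vfrac_nth frac_lt_1)

lemma vfrac_id: "x \<in> torus \<Longrightarrow> vfrac x = x"
  by (simp add: vec_eq_iff vfrac_nth frac_torus)

lemma intm_intv_vfrac: "intm A \<Longrightarrow> intv (A *v vfrac u - A *v u)"
proof -
  assume "intm A"
  then have "intv (A *v (vfrac u - u))" using intv_vfrac[of u] intv_minus
    by (metis intm_intv minus_diff_eq)
  then show ?thesis by (simp add: matrix_vector_mult_diff_distrib)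
qed

lemma det_Ints: "intm A \<Longrightarrow> det A \<in> \<int>"
  unfolding det_def intm_def by (auto intro!: Ints_sum Ints_mult Ints_prod)

definition Ar :: "int^'m^'r \<Rightarrow> real^'m^'r" where "Ar L = (\<chi> k i. real_of_int (L$k$i))"
definition Mr :: "int^'m^'r \<Rightarrow> real^'r^'r" where "Mr L = Ar L ** transpose (Ar L)"
definition Dt :: "int^'m^'r \<Rightarrow> real" where "Dt L = det (Mr L)"
definition Bi :: "int^'m^'r \<Rightarrow> real^'r^'r" where "Bi L = matrix_inv (Mr L)"

lemma intm_Ar: "intm (Ar L)" by (simp add: intm_def Ar_def)
lemma intm_transpose: "intm A \<Longrightarrow> intm (transpose A)" by (simp add: intm_def transpose_def)
lemma intm_mult: "intm A \<Longrightarrow> intm B \<Longrightarrow> intm (A ** B)"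
  by (auto simp: intm_def matrix_matrix_mult_def intro!: Ints_sum Ints_mult)
lemma intm_Mr: "intm (Mr L)" by (simp add: Mr_def intm_mult intm_transpose intm_Ar)
lemma Dt_Ints: "Dt L \<in> \<int>" by (simp add: Dt_def det_Ints intm_Mr)

lemma kerT_Ar: "x \<in> kerT L \<longleftrightarrow> x \<in> torus \<and> intv (Ar L *v x)"
  by (simp add: kerT_def intv_def Ar_def matrix_vector_mult_def)

context
  fixes L :: "int^'m^'r"
  assumes rk: "rank (\<chi> k i. real_of_int (L$k$i)) = CARD('r)"
begin

lemma inj_AT: "inj ((*v) (transpose (Ar L)))"
proof -
  have "rank (transpose (Ar L)) = CARD('r)" using rk by (simp add: rank_transpose Ar_def)
  then show ?thesis by (simp add: full_rank_injective)
qed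

lemma inj_Mr: "inj ((*v) (Mr L))"
proof (rule injI)
  fix x y assume e: "Mr L *v x = Mr L *v y"
  let ?z = "x - y"
  have "Mr L *v ?z = 0" using e by (simp add: matrix_vector_mult_diff_distrib)
  then have "inner ?z (Mr L *v ?z) = 0" by simp
  moreover have "inner ?z (Mr L *v ?z) = inner (transpose (Ar L) *v ?z) (transpose (Ar L) *v ?z)"
    unfolding Mr_def matrix_vector_mul_assoc[symmetric] dot_lmul_matrix[symmetric] by simp
  ultimately have "transpose (Ar L) *v ?z = transpose (Ar L) *v 0" by simp
  then have "?z = 0" by (rule injD[OF inj_AT])
  then show "x = y" by simp
qed

lemma invertible_Mr: "invertible (Mr L)"
  using inj_Mr by (simp add: invertible_left_inverse matrix_left_invertible_injective)

lemma Dt_nz: "Dt L \<noteq> 0"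
  using invertible_Mr by (simp add: Dt_def invertible_det_nz)

lemma Mr_Bi: "Mr L ** Bi L = mat 1"
proof -
  obtain B where "Mr L ** B = mat 1 \<and> B ** Mr L = mat 1" using invertible_Mr by (auto simp: invertible_def)
  then have "Mr L ** matrix_inv (Mr L) = mat 1 \<and> matrix_inv (Mr L) ** Mr L = mat 1"
    unfolding matrix_inv_def by (rule someI)
  then show ?thesis by (simp add: Bi_def)
qed

lemma Mr_Bi_v: "Mr L *v (Bi L *v n) = n"
  by (simp add: matrix_vector_mul_assoc Mr_Bi)

lemma Bi_int: "intv n \<Longrightarrow> intv (Dt L *\<^sub>R (Bi L *v n))"
proof -
  assume n: "intv n"
  have "Bi L *v n = (\<chi> k. det(\<chi> i j. if j=k then n$i else Mr L$i$j) / det (Mr L))"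
    using cramer[OF Dt_nz[unfolded Dt_def], of "Bi L *v n" n] Mr_Bi_v by simp
  then have "(Dt L *\<^sub>R (Bi L *v n)) $ k = det(\<chi> i j. if j=k then n$i else Mr L$i$j)" for k
    using Dt_nz by (simp add: Dt_def)
  moreover have "det(\<chi> i j. if j=k then n$i else Mr L$i$j) \<in> \<int>" for k
    using n intm_Mr by (intro det_Ints) (auto simp: intm_def intv_def)
  ultimately show ?thesis by (simp add: intv_def)
qed

end

definition veq :: "real^'n \<Rightarrow> real^'n \<Rightarrow> bool" where "veq u w \<longleftrightarrow> intv (u - w)"

lemma veq_refl: "veq u u" by (simp add: veq_def intv_0)
lemma veq_sym: "veq u w \<Longrightarrow> veq w u"
  unfolding veq_def by (metis intv_minus minus_diff_eq)
lemma veq_trans: "veq u v \<Longrightarrow> veq v w \<Longrightarrow> veq u w"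
proof -
  assume "veq u v" "veq v w"
  then have "intv ((u - v) + (v - w))" unfolding veq_def by (rule intv_add)
  then show ?thesis by (simp add: veq_def)
qed
lemma veq_add: "veq u u' \<Longrightarrow> veq w w' \<Longrightarrow> veq (u + w) (u' + w')"
proof -
  assume "veq u u'" "veq w w'"
  then have "intv ((u - u') + (w - w'))" unfolding veq_def by (rule intv_add)
  moreover have "(u - u') + (w - w') = (u + w) - (u' + w')" by (simp add: algebra_simps)
  ultimately show ?thesis by (simp add: veq_def)
qed
lemma veq_diff: "veq u u' \<Longrightarrow> veq w w' \<Longrightarrow> veq (u - w) (u' - w')"
proof -
  assume "veq u u'" "veq w w'"
  then have "intv ((u - u') - (w - w'))" unfolding veq_def by (rule intv_diff)
  moreover have "(u - u') - (w - w') = (u - w) - (u' - w')" by (simp add: algebra_simps)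
  ultimately show ?thesis by (simp add: veq_def)
qed
lemma veq_vfrac: "veq (vfrac u) u" using intv_vfrac veq_sym by (auto simp: veq_def)
lemma veq_vfrac_iff: "vfrac u = vfrac w \<longleftrightarrow> veq u w" by (simp add: vfrac_eq_iff veq_def)
lemma veq_intm: "intm A \<Longrightarrow> veq u w \<Longrightarrow> veq (A *v u) (A *v w)"
  unfolding veq_def by (metis intm_intv matrix_vector_mult_diff_distrib)
lemma veq_intv: "veq u w \<Longrightarrow> intv w \<Longrightarrow> intv u"
proof -
  assume "veq u w" "intv w"
  then have "intv ((u - w) + w)" unfolding veq_def by (rule intv_add)
  then show ?thesis by simp
qed

definition QV :: "int^'m^'r \<Rightarrow> real^'m \<Rightarrow> real^'m" where
  "QV L x = Dt L *\<^sub>R x - transpose (Ar L) *v (Dt L *\<^sub>R (Bi L *v (Ar L *v x)))"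
definition piL :: "int^'m^'r \<Rightarrow> real^'m \<Rightarrow> real^'m" where
  "piL L x = vfrac (QV L x)"
definition hT :: "int^'m^'r \<Rightarrow> real^'r \<Rightarrow> real^'m" where
  "hT L n = vfrac (transpose (Ar L) *v (Bi L *v n))"
definition T0 :: "int^'m^'r \<Rightarrow> (real^'m) set" where
  "T0 L = hT L ` {n. intv n}"
definition Gt :: "int^'m^'r \<Rightarrow> real^'m \<Rightarrow> real^'m \<Rightarrow> real^'m" where
  "Gt L t x = tadd t (piL L x)"

lemma mv_neg: "(A::real^'n^'m) *v (- x) = - (A *v x)"
  using matrix_vector_mult_diff_distrib[of A 0 x] by simp

lemma QV_diff: "QV L (u - w) = QV L u - QV L w"
  by (simp add: QV_def algebra_simps)

lemma QV_add: "QV L (u + w) = QV L u + QV L w"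
  by (simp add: QV_def algebra_simps)



definition ta :: "int^'m^'r \<Rightarrow> real^'m \<Rightarrow> real^'m" where "ta L a = hT L (Ar L *v a)"
definition bv :: "int^'m^'r \<Rightarrow> real^'m \<Rightarrow> real^'m" where "bv L a = vfrac ((1 / Dt L) *\<^sub>R a)"

context
  fixes L :: "int^'m^'r"
  assumes rk: "rank (\<chi> k i. real_of_int (L$k$i)) = CARD('r)"
begin

lemma Ar_QV: "Ar L *v QV L x = 0"
proof -
  have "Ar L *v QV L x = Dt L *\<^sub>R (Ar L *v x) - Dt L *\<^sub>R ((Ar L ** transpose (Ar L)) *v (Bi L *v (Ar L *v x)))"
    by (simp add: QV_def matrix_vector_mult_diff_distrib matrix_vector_mult_scaleR matrix_vector_mul_assoc matrix_mul_assoc)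
  also have "\<dots> = 0" using Mr_Bi_v[OF rk] by (simp add: Mr_def)
  finally show ?thesis .
qed

lemma QV_intv: "intv w \<Longrightarrow> intv (QV L w)"
  unfolding QV_def
  by (intro intv_diff intv_scaleR Dt_Ints intm_intv[OF intm_transpose[OF intm_Ar]] Bi_int[OF rk]
      intm_intv[OF intm_Ar])

lemma veq_QV: "veq u w \<Longrightarrow> veq (QV L u) (QV L w)"
  unfolding veq_def QV_diff[symmetric] by (rule QV_intv)

lemma QV_scale: "QV L ((1 / Dt L) *\<^sub>R a) = a - transpose (Ar L) *v (Bi L *v (Ar L *v a))"
  using Dt_nz[OF rk] by (simp add: QV_def matrix_vector_mult_scaleR)

lemma hT_add: "tadd (hT L n) (hT L n') = hT L (n + n')"
  unfolding hT_def tadd_vfrac veq_vfrac_iff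
  by (rule veq_trans[OF veq_add[OF veq_vfrac veq_vfrac]]) (simp add: veq_refl algebra_simps)

lemma hT_neg: "tneg (hT L n) = hT L (- n)"
proof -
  have "veq (- vfrac (transpose (Ar L) *v (Bi L *v n))) (transpose (Ar L) *v (Bi L *v (- n)))"
    using veq_diff[OF veq_refl[of 0] veq_vfrac[of "transpose (Ar L) *v (Bi L *v n)"]]
    by (simp add: mv_neg algebra_simps)
  then show ?thesis unfolding hT_def tneg_vfrac veq_vfrac_iff .
qed

lemma T0_tadd: "t \<in> T0 L \<Longrightarrow> s \<in> T0 L \<Longrightarrow> tadd t s \<in> T0 L"
  unfolding T0_def using hT_add intv_add by fastforce

lemma T0_tneg: "t \<in> T0 L \<Longrightarrow> tneg t \<in> T0 L"
  unfolding T0_def using hT_neg intv_minus by fastforce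

lemma T0_torus: "t \<in> T0 L \<Longrightarrow> t \<in> torus"
  unfolding T0_def hT_def by auto

lemma Ar_hT: "intv n \<Longrightarrow> intv (Ar L *v hT L n)"
proof -
  assume n: "intv n"
  have "veq (Ar L *v hT L n) (Ar L *v (transpose (Ar L) *v (Bi L *v n)))"
    unfolding hT_def by (rule veq_intm[OF intm_Ar veq_vfrac])
  moreover have "Ar L *v (transpose (Ar L) *v (Bi L *v n)) = n"
    using Mr_Bi_v[OF rk] by (simp add: Mr_def matrix_vector_mul_assoc matrix_mul_assoc del: transpose_matrix_vector)
  ultimately show ?thesis using n veq_intv by simp
qed

lemma Gt_kerT: "t \<in> T0 L \<Longrightarrow> Gt L t x \<in> kerT L"
proof -
  assume "t \<in> T0 L"
  then obtain n where n: "intv n" "t = hT L n" by (auto simp: T0_def)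
  have "veq (Ar L *v Gt L t x) (Ar L *v (t + QV L x))"
    unfolding Gt_def tadd_vfrac piL_def
    by (rule veq_intm[OF intm_Ar veq_trans[OF veq_vfrac veq_add[OF veq_refl veq_vfrac]]])
  moreover have "Ar L *v (t + QV L x) = Ar L *v t" by (simp add: matrix_vector_right_distrib Ar_QV)
  moreover have "intv (Ar L *v t)" using n Ar_hT by simp
  ultimately have "intv (Ar L *v Gt L t x)" using veq_intv by metis
  then show ?thesis by (simp add: kerT_Ar Gt_def)
qed


lemma ta_T0: "a \<in> kerT L \<Longrightarrow> ta L a \<in> T0 L"
  by (auto simp: ta_def T0_def kerT_Ar)

lemma Gt_shift: "tadd a (Gt L t x) = Gt L (tadd t (ta L a)) (tadd (bv L a) x)"
proof -
  let ?w = "transpose (Ar L) *v (Bi L *v (Ar L *v a))"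
  have l: "veq (a + (t + QV L x)) (a + vfrac (t + vfrac (QV L x)))"
    by (intro veq_add veq_refl veq_sym[OF veq_trans[OF veq_vfrac veq_add[OF veq_refl veq_vfrac]]])
  have "veq (vfrac (t + ta L a) + vfrac (QV L (vfrac (bv L a + x)))) (t + ?w + QV L (bv L a + x))"
    unfolding ta_def hT_def
    by (intro veq_add veq_trans[OF veq_vfrac] veq_refl veq_vfrac veq_QV)
  moreover have "veq (QV L (bv L a + x)) (QV L ((1 / Dt L) *\<^sub>R a) + QV L x)"
    unfolding QV_add bv_def by (intro veq_add veq_QV veq_vfrac veq_refl)
  ultimately have "veq (vfrac (t + ta L a) + vfrac (QV L (vfrac (bv L a + x)))) (t + ?w + (QV L ((1 / Dt L) *\<^sub>R a) + QV L x))"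
    by (rule veq_trans[OF _ veq_add[OF veq_refl]])
  also have "t + ?w + (QV L ((1 / Dt L) *\<^sub>R a) + QV L x) = a + (t + QV L x)"
    unfolding QV_scale by (simp add: algebra_simps)
  finally have r: "veq (vfrac (t + ta L a) + vfrac (QV L (vfrac (bv L a + x)))) (a + (t + QV L x))" .
  show ?thesis
    unfolding Gt_def tadd_vfrac piL_def veq_vfrac_iff
    using veq_sym[OF veq_trans[OF r l]] .
qed

end

lemma finite_vecset:
  assumes "finite F"
  shows "finite {t :: real^'n. \<forall>i. t$i \<in> F}"
proof -
  have "{t :: real^'n. \<forall>i. t$i \<in> F} \<subseteq> vec_lambda ` (PiE UNIV (\<lambda>_. F))"
  proof
    fix t :: "real^'n" assume "t \<in> {t. \<forall>i. t$i \<in> F}"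
    then have "vec_nth t \<in> PiE UNIV (\<lambda>_. F)" by auto
    then show "t \<in> vec_lambda ` (PiE UNIV (\<lambda>_. F))" by (metis image_eqI vec_nth_inverse)
  qed
  moreover have "finite (PiE UNIV (\<lambda>_::'n. F))" using assms by (intro finite_PiE) auto
  ultimately show ?thesis by (metis finite_surj)
qed

lemma finite_denom:
  assumes "(d::real) \<noteq> 0"
  shows "finite {y. 0 \<le> y \<and> y < 1 \<and> d * y \<in> \<int>}"
proof -
  have "{y. 0 \<le> y \<and> y < 1 \<and> d * y \<in> \<int>} \<subseteq> (\<lambda>k. real_of_int k / d) ` {k. \<bar>k\<bar> \<le> \<lceil>\<bar>d\<bar>\<rceil>}"
  proof
    fix y assume y: "y \<in> {y. 0 \<le> y \<and> y < 1 \<and> d * y \<in> \<int>}"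
    then obtain k where k: "d * y = real_of_int k" by (auto elim: Ints_cases)
    have "\<bar>real_of_int k\<bar> = \<bar>d * y\<bar>" using k by simp
    also have "\<dots> = \<bar>d\<bar> * y" using y by (simp add: abs_mult)
    also have "\<dots> \<le> \<bar>d\<bar>" using y by (simp add: mult_left_le)
    finally have "\<bar>k\<bar> \<le> \<lceil>\<bar>d\<bar>\<rceil>" by linarith
    moreover have "y = real_of_int k / d" using k assms by (simp add: field_simps)
    ultimately show "y \<in> (\<lambda>k. real_of_int k / d) ` {k. \<bar>k\<bar> \<le> \<lceil>\<bar>d\<bar>\<rceil>}" by auto
  qed
  moreover have "finite {k::int. \<bar>k\<bar> \<le> \<lceil>\<bar>d\<bar>\<rceil>}"
    by (rule finite_subset[of _ "{-\<lceil>\<bar>d\<bar>\<rceil>..\<lceil>\<bar>d\<bar>\<rceil>}"]) auto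
  ultimately show ?thesis by (meson finite_imageI finite_subset)
qed

context
  fixes L :: "int^'m^'r"
  assumes rk: "rank (\<chi> k i. real_of_int (L$k$i)) = CARD('r)"
begin

lemma T0_finite: "finite (T0 L)"
proof -
  let ?F = "{y. 0 \<le> y \<and> y < 1 \<and> Dt L * y \<in> \<int>}"
  have "T0 L \<subseteq> {t. \<forall>i. t$i \<in> ?F}"
  proof
    fix t assume "t \<in> T0 L"
    then obtain n where n: "intv n" "t = hT L n" by (auto simp: T0_def)
    let ?w = "transpose (Ar L) *v (Bi L *v n)"
    have wi: "intv (Dt L *\<^sub>R ?w)"
      using intm_intv[OF intm_transpose[OF intm_Ar] Bi_int[OF rk n(1)]] by (simp add: matrix_vector_mult_scaleR)
    show "t \<in> {t. \<forall>i. t$i \<in> ?F}"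
    proof (rule CollectI, rule allI)
      fix i
      have "Dt L * frac (?w$i) = Dt L * ?w$i - Dt L * of_int \<lfloor>?w$i\<rfloor>" by (simp add: frac_def algebra_simps)
      also have "\<dots> \<in> \<int>"
      proof (rule Ints_diff)
        show "Dt L * ?w$i \<in> \<int>" using wi by (auto simp: intv_def)
        show "Dt L * of_int \<lfloor>?w$i\<rfloor> \<in> \<int>" using Dt_Ints by (intro Ints_mult) auto
      qed
      finally show "t$i \<in> ?F" using n by (simp add: hT_def vfrac_nth frac_lt_1)
    qed
  qed
  moreover have "finite {t::real^'m. \<forall>i. t$i \<in> ?F}"
    by (intro finite_vecset finite_denom Dt_nz[OF rk])
  ultimately show ?thesis by (rule finite_subset)
qed

lemma T0_ne: "hT L 0 \<in> T0 L" by (auto simp: T0_def intv_0)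

end

lemma lborel_shift: 
  fixes c :: "real^'n"
  assumes "S \<in> sets borel"
  shows "emeasure lborel ((\<lambda>x. c + x) -` S) = emeasure lborel S"
proof -
  have "emeasure (distr lborel borel ((+) c)) S = emeasure lborel ((+) c -` S \<inter> space lborel)"
    by (rule emeasure_distr) (auto simp: assms)
  then show ?thesis by (simp add: lborel_distr_plus)
qed

lemma torus_shift_measure:
  fixes b :: "real^'n"
  assumes b: "b \<in> torus" and E: "E \<in> sets borel"
  shows "emeasure lborel {x \<in> torus. tadd b x \<in> E} = emeasure lborel (torus \<inter> E)"
proof -
  define c where "c W = b - (\<chi> i. if i \<in> W then 1 else 0)" for W :: "'n set"
  define P where "P W = {x \<in> torus. \<forall>i. (i \<in> W \<longleftrightarrow> 1 \<le> x$i + b$i)}" for W :: "'n set"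
  define Qs where "Qs W = {y \<in> torus. \<forall>i. (i \<in> W \<longleftrightarrow> y$i < b$i)}" for W :: "'n set"
  have bi: "0 \<le> b$i" "b$i < 1" for i using b by (auto simp: in_torus)
  have Pc: "x \<in> P W \<longleftrightarrow> c W + x \<in> Qs W" for x W
    using bi unfolding P_def Qs_def c_def in_torus
    by (auto simp: algebra_simps) (smt (verit))+
  have tP: "tadd b x = c W + x" if "x \<in> P W" for x W
  proof -
    have "frac (b$i + x$i) = (c W + x)$i" for i
    proof (cases "i \<in> W")
      case True
      then have "1 \<le> x$i + b$i" "x$i < 1" "0 \<le> x$i" using that by (auto simp: P_def in_torus)
      then have "frac (b$i + x$i) = b$i + x$i - 1" using bi[of i] by (subst frac_unique_iff) auto
      then show ?thesis using True by (simp add: c_def)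
    next
      case False
      then have "x$i + b$i < 1" "0 \<le> x$i" using that by (auto simp: P_def in_torus)
      then have "frac (b$i + x$i) = b$i + x$i" using bi[of i] by (subst frac_eq) auto
      then show ?thesis using False by (simp add: c_def)
    qed
    then show ?thesis by (simp add: vec_eq_iff tadd_nth)
  qed
  have Pb: "P W \<in> sets borel" for W
  proof -
    have *: "x \<in> (if i \<in> W then {x. 1 \<le> x$i + b$i} else {x. x$i + b$i < 1}) \<longleftrightarrow> (i \<in> W \<longleftrightarrow> 1 \<le> x$i + b$i)" for x i
      by auto
    have "P W = torus \<inter> (\<Inter>i. if i \<in> W then {x. 1 \<le> x$i + b$i} else {x. x$i + b$i < 1})"
      unfolding P_def using * by blast
    also have "\<dots> \<in> sets borel" by (intro sets.Int torus_borel sets.finite_INT) auto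
    finally show ?thesis .
  qed
  have Qb: "Qs W \<in> sets borel" for W
  proof -
    have *: "x \<in> (if i \<in> W then {x. x$i < b$i} else {x. b$i \<le> x$i}) \<longleftrightarrow> (i \<in> W \<longleftrightarrow> x$i < b$i)" for x i
      by auto
    have "Qs W = torus \<inter> (\<Inter>i. if i \<in> W then {x. x$i < b$i} else {x. b$i \<le> x$i})"
      unfolding Qs_def using * by blast
    also have "\<dots> \<in> sets borel" by (intro sets.Int torus_borel sets.finite_INT) auto
    finally show ?thesis .
  qed
  have dP: "disjoint_family_on (\<lambda>W. (\<lambda>x. c W + x) -` (Qs W \<inter> E)) UNIV"
    unfolding disjoint_family_on_def
  proof (intro ballI impI)
    fix V W :: "'n set" assume "V \<noteq> W"
    show "(\<lambda>x. c V + x) -` (Qs V \<inter> E) \<inter> (\<lambda>x. c W + x) -` (Qs W \<inter> E) = {}"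
    proof (rule ccontr)
      assume "\<not> ?thesis"
      then obtain x where "c V + x \<in> Qs V" "c W + x \<in> Qs W" by auto
      then have "x \<in> P V" "x \<in> P W" using Pc by auto
      then have "V = W" by (auto simp: P_def)
      then show False using \<open>V \<noteq> W\<close> by simp
    qed
  qed
  have dQ: "disjoint_family_on (\<lambda>W. Qs W \<inter> E) UNIV"
    unfolding disjoint_family_on_def Qs_def by auto
  have "{x \<in> torus. tadd b x \<in> E} = (\<Union>W. (\<lambda>x. c W + x) -` (Qs W \<inter> E))"
  proof (safe)
    fix x assume x: "x \<in> torus" "tadd b x \<in> E"
    define W where "W = {i. 1 \<le> x$i + b$i}"
    have "x \<in> P W" using x by (auto simp: P_def W_def)
    then show "x \<in> (\<Union>W. (\<lambda>x. c W + x) -` (Qs W \<inter> E))" using Pc tP x by auto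
  next
    fix x W assume "c W + x \<in> Qs W" "c W + x \<in> E"
    then have "x \<in> P W" using Pc by auto
    then show "x \<in> torus" "tadd b x \<in> E" using tP \<open>c W + x \<in> E\<close> by (auto simp: P_def)
  qed
  moreover have m: "(\<lambda>W. (\<lambda>x. c W + x) -` (Qs W \<inter> E)) ` UNIV \<subseteq> sets lborel"
  proof (rule image_subsetI)
    fix W
    have "(\<lambda>x. c W + x) \<in> borel_measurable borel" by measurable
    from measurable_sets[OF this sets.Int[OF Qb E]] show "(\<lambda>x. c W + x) -` (Qs W \<inter> E) \<in> sets lborel" by simp
  qed
  ultimately have "emeasure lborel {x \<in> torus. tadd b x \<in> E} = (\<Sum>W\<in>UNIV. emeasure lborel ((\<lambda>x. c W + x) -` (Qs W \<inter> E)))"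
    using sum_emeasure[OF m dP finite_class.finite_UNIV] by simp
  also have "\<dots> = (\<Sum>W\<in>UNIV. emeasure lborel (Qs W \<inter> E))"
    by (intro sum.cong refl lborel_shift sets.Int Qb E)
  also have "\<dots> = emeasure lborel (\<Union>W. Qs W \<inter> E)"
    by (rule sum_emeasure[OF _ dQ finite_class.finite_UNIV]) (use Qb E in auto)
  also have "(\<Union>W. Qs W \<inter> E) = torus \<inter> E"
  proof safe
    fix y assume y: "y \<in> torus" "y \<in> E"
    define W where "W = {i. y$i < b$i}"
    have "y \<in> Qs W" using y by (auto simp: Qs_def W_def)
    then show "y \<in> (\<Union>W. Qs W \<inter> E)" using y by auto
  qed (auto simp: Qs_def)
  finally show ?thesis .
qed


lemma mv_cont: "continuous_on S (\<lambda>x. (A::real^'n^'m) *v f x)" if "continuous_on S f"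
  using continuous_on_compose2[OF matrix_vector_mult_linear_continuous_on that] by auto

lemma QV_borel: "QV L \<in> borel_measurable borel"
  by (rule borel_measurable_continuous_onI) (unfold QV_def, intro continuous_intros mv_cont)

lemma vfrac_measurable: "f \<in> borel_measurable M \<Longrightarrow> (\<lambda>x. vfrac (f x) :: real^'n) \<in> borel_measurable M"
  by (rule vec_borel_measurableI) (simp add: vfrac_nth)

lemma Gt_borel: "(\<lambda>x. Gt L t x) \<in> borel_measurable borel"
  unfolding Gt_def piL_def
  by (intro tadd_measurable2 vfrac_measurable QV_borel) simp

lemma Gt_pre_sets: "S \<in> sets borel \<Longrightarrow> {x \<in> torus. Gt L t x \<in> S} \<in> sets lborel"
proof -
  assume S: "S \<in> sets borel"
  have "{x \<in> torus. Gt L t x \<in> S} = torus \<inter> ((\<lambda>x. Gt L t x) -` S \<inter> space borel)" by auto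
  also have "\<dots> \<in> sets borel" using measurable_sets[OF Gt_borel S] torus_borel by auto
  finally show ?thesis by simp
qed

lemma torus_measure: "emeasure lborel (torus :: (real^'n) set) = 1"
proof -
  have B: "\<forall>b\<in>(Basis :: (real^'n) set). (vec 1 - 0) \<bullet> b = 1"
    by (auto simp: Basis_vec_def inner_axis)
  have "emeasure lborel (box 0 (vec 1 :: real^'n)) = 1"
    using B by (simp add: emeasure_lborel_box_eq)
  moreover have "emeasure lborel (cbox 0 (vec 1 :: real^'n)) = 1"
    using B by (simp add: emeasure_lborel_cbox_eq)
  moreover have "box 0 (vec 1) \<subseteq> (torus :: (real^'n) set)" "torus \<subseteq> cbox 0 (vec 1 :: real^'n)"
    by (auto simp: mem_box_cart in_torus less_imp_le)
  ultimately show ?thesis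
    by (metis emeasure_mono order_antisym sets_lborel torus_borel box_borel cbox_borel)
qed

definition fC :: "int^'m^'r \<Rightarrow> (real^'m) set \<Rightarrow> ennreal" where
  "fC L S = ennreal (1 / real (card (T0 L))) * (\<Sum>t\<in>T0 L. emeasure lborel {x \<in> torus. Gt L t x \<in> S})"

definition haarC :: "int^'m^'r \<Rightarrow> (real^'m) measure" where
  "haarC L = measure_of (kerT L) (sets (restrict_space borel (kerT L))) (fC L)"

lemma sa_ker: fixes L :: "int^'m^'r" shows "sigma_algebra (kerT L) (sets (restrict_space borel (kerT L)))"
proof -
  have "sigma_algebra (space (restrict_space borel (kerT L))) (sets (restrict_space borel (kerT L)))"
    by (rule sets.sigma_algebra_axioms)
  then show ?thesis by (simp add: space_restrict_space)
qed

lemma fC_ca: fixes L :: "int^'m^'r" shows "countably_additive (sets (restrict_space borel (kerT L))) (fC L)"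
  unfolding countably_additive_def
proof (intro allI impI)
  fix A :: "nat \<Rightarrow> (real^'m) set"
  assume A: "range A \<subseteq> sets (restrict_space borel (kerT L))" and d: "disjoint_family A"
  have Ab: "A i \<in> sets borel" for i using A sets_haar by blast
  have "(\<Sum>i. fC L (A i)) = ennreal (1 / real (card (T0 L))) * (\<Sum>i. \<Sum>t\<in>T0 L. emeasure lborel {x \<in> torus. Gt L t x \<in> A i})"
    by (simp add: fC_def)
  also have "(\<Sum>i. \<Sum>t\<in>T0 L. emeasure lborel {x \<in> torus. Gt L t x \<in> A i}) = (\<Sum>t\<in>T0 L. \<Sum>i. emeasure lborel {x \<in> torus. Gt L t x \<in> A i})"
    by (rule suminf_sum) simp
  also have "\<dots> = (\<Sum>t\<in>T0 L. emeasure lborel {x \<in> torus. Gt L t x \<in> (\<Union>i. A i)})"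
  proof (rule sum.cong[OF refl])
    fix t
    have "(\<Sum>i. emeasure lborel {x \<in> torus. Gt L t x \<in> A i}) = emeasure lborel (\<Union>i. {x \<in> torus. Gt L t x \<in> A i})"
    proof (rule suminf_emeasure)
      show "range (\<lambda>i. {x \<in> torus. Gt L t x \<in> A i}) \<subseteq> sets lborel" using Gt_pre_sets Ab by auto
      show "disjoint_family (\<lambda>i. {x \<in> torus. Gt L t x \<in> A i})"
        using d unfolding disjoint_family_on_def by auto
    qed
    also have "(\<Union>i. {x \<in> torus. Gt L t x \<in> A i}) = {x \<in> torus. Gt L t x \<in> (\<Union>i. A i)}" by auto
    finally show "(\<Sum>i. emeasure lborel {x \<in> torus. Gt L t x \<in> A i}) = emeasure lborel {x \<in> torus. Gt L t x \<in> (\<Union>i. A i)}" .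
  qed
  finally show "(\<Sum>i. fC L (A i)) = fC L (\<Union>i. A i)" by (simp add: fC_def)
qed

lemma emeasure_haarC: "S \<in> sets (restrict_space borel (kerT L)) \<Longrightarrow> emeasure (haarC L) S = fC L S"
  unfolding haarC_def
  by (rule emeasure_measure_of_sigma[OF sa_ker _ fC_ca]) (simp add: positive_def fC_def)

lemma sets_haarC: "sets (haarC L) = sets (restrict_space borel (kerT L))"
  unfolding haarC_def by (rule sigma_algebra.sets_measure_of_eq[OF sa_ker])

lemma space_haarC: "space (haarC L) = kerT L"
  unfolding haarC_def by (rule sigma_algebra.space_measure_of_eq[OF sa_ker])


lemma tadd_tneg_self: "tadd s (tneg s) = 0"
proof -
  have "vfrac (s + vfrac (- s)) = vfrac 0"
    unfolding veq_vfrac_iff using veq_add[OF veq_refl[of s] veq_vfrac[of "- s"]] by simp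
  then show ?thesis by (simp add: tadd_vfrac tneg_vfrac vfrac_def vec_eq_iff)
qed

lemma tadd_zero: "t \<in> torus \<Longrightarrow> tadd t 0 = t"
  by (simp add: tadd_vfrac vfrac_id)

lemma tadd_cancel: "t \<in> torus \<Longrightarrow> tadd (tadd t s) (tneg s) = t"
  by (simp add: tadd_assoc tadd_tneg_self tadd_zero)

lemma vfrac_zero: "vfrac 0 = 0" by (simp add: vfrac_def vec_eq_iff)

context
  fixes L :: "int^'m^'r"
  assumes rk: "rank (\<chi> k i. real_of_int (L$k$i)) = CARD('r)"
begin

lemma T0_bij: "s \<in> T0 L \<Longrightarrow> bij_betw (\<lambda>t. tadd t s) (T0 L) (T0 L)"
proof (rule bij_betw_byWitness[where f' = "\<lambda>t. tadd t (tneg s)"])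
  assume s: "s \<in> T0 L"
  show "\<forall>a\<in>T0 L. tadd (tadd a s) (tneg s) = a" using T0_torus[OF rk] tadd_cancel by blast
  show "\<forall>a\<in>T0 L. tadd (tadd a (tneg s)) s = a"
    using T0_torus[OF rk] tadd_cancel[of _ "tneg s"] tneg_tneg T0_torus[OF rk s] by force
  show "(\<lambda>t. tadd t s) ` T0 L \<subseteq> T0 L" using T0_tadd[OF rk] s by auto
  show "(\<lambda>t. tadd t (tneg s)) ` T0 L \<subseteq> T0 L" using T0_tadd[OF rk] T0_tneg[OF rk] s by auto
qed

lemma card_T0_pos: "card (T0 L) > 0"
  using T0_finite[OF rk] T0_ne[OF rk] by (auto simp: card_gt_0_iff)

lemma haarC_space1: "emeasure (haarC L) (kerT L) = 1"
proof -
  have k: "kerT L \<in> sets (restrict_space borel (kerT L))" by (simp add: sets_haar kerT_borel)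
  have "\<And>t. t \<in> T0 L \<Longrightarrow> {x \<in> torus. Gt L t x \<in> kerT L} = torus" using Gt_kerT[OF rk] by auto
  then have "(\<Sum>t\<in>T0 L. emeasure lborel {x \<in> torus. Gt L t x \<in> kerT L}) = (\<Sum>t\<in>T0 L. 1)"
    by (simp add: torus_measure)
  also have "\<dots> = ennreal (real (card (T0 L)))" by (simp add: ennreal_of_nat_eq_real_of_nat)
  finally have "fC L (kerT L) = ennreal (1 / real (card (T0 L))) * ennreal (real (card (T0 L)))"
    by (simp add: fC_def)
  also have "\<dots> = ennreal (1 / real (card (T0 L)) * real (card (T0 L)))" by (rule ennreal_mult[symmetric]) auto
  also have "\<dots> = 1" using card_T0_pos by simp
  finally show ?thesis using emeasure_haarC[OF k] by simp
qed

lemma haarC_inv: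
  assumes a: "a \<in> kerT L" and B: "B \<in> sets (restrict_space borel (kerT L))"
  shows "emeasure (haarC L) (tadd a ` B) = emeasure (haarC L) B"
proof -
  have Bk: "B \<subseteq> kerT L" and Bb: "B \<in> sets borel" using B sets_haar by auto
  have Bt: "B \<subseteq> torus" using Bk kerT_torus by auto
  have im: "tadd a ` B = {y \<in> torus. tadd (tneg a) y \<in> B}" by (rule tadd_image[OF Bt])
  have imb: "tadd a ` B \<in> sets borel"
  proof -
    have "{y \<in> torus. tadd (tneg a) y \<in> B} = torus \<inter> ((\<lambda>y. tadd (tneg a) y) -` B \<inter> space borel)" by auto
    also have "\<dots> \<in> sets borel" using measurable_sets[OF tadd_measurable Bb] torus_borel by auto
    finally show ?thesis using im by simp
  qed
  have imk: "tadd a ` B \<subseteq> kerT L" using Bk a tadd_kerT by blast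
  have imS: "tadd a ` B \<in> sets (restrict_space borel (kerT L))" using imb imk sets_haar by blast
  define a' where "a' = tneg a"
  have a': "a' \<in> kerT L" using tneg_kerT[OF a] by (simp add: a'_def)
  define s where "s = ta L a'"
  have s: "s \<in> T0 L" unfolding s_def by (rule ta_T0[OF rk a'])
  have bt: "bv L a' \<in> torus" by (simp add: bv_def)
  have "emeasure lborel {x \<in> torus. Gt L t x \<in> tadd a ` B} = emeasure lborel {x \<in> torus. Gt L (tadd t s) x \<in> B}" for t
  proof -
    have "{x \<in> torus. Gt L t x \<in> tadd a ` B} = {x \<in> torus. tadd (bv L a') x \<in> {y. Gt L (tadd t s) y \<in> B}}"
      using im Gt_shift[OF rk, of a' t] by (auto simp: a'_def s_def Gt_def)
    also have "emeasure lborel \<dots> = emeasure lborel (torus \<inter> {y. Gt L (tadd t s) y \<in> B})"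
    proof (rule torus_shift_measure[OF bt])
      have "{y. Gt L (tadd t s) y \<in> B} = (\<lambda>y. Gt L (tadd t s) y) -` B \<inter> space borel" by auto
      then show "{y. Gt L (tadd t s) y \<in> B} \<in> sets borel" using measurable_sets[OF Gt_borel Bb] by simp
    qed
    also have "torus \<inter> {y. Gt L (tadd t s) y \<in> B} = {x \<in> torus. Gt L (tadd t s) x \<in> B}" by auto
    finally show ?thesis .
  qed
  then have "fC L (tadd a ` B) = ennreal (1 / real (card (T0 L))) * (\<Sum>t\<in>T0 L. emeasure lborel {x \<in> torus. Gt L (tadd t s) x \<in> B})"
    by (simp add: fC_def)
  also have "(\<Sum>t\<in>T0 L. emeasure lborel {x \<in> torus. Gt L (tadd t s) x \<in> B}) = (\<Sum>t\<in>T0 L. emeasure lborel {x \<in> torus. Gt L t x \<in> B})"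
    using sum.reindex_bij_betw[OF T0_bij[OF s], of "\<lambda>t. emeasure lborel {x \<in> torus. Gt L t x \<in> B}"] by simp
  finally have "fC L (tadd a ` B) = fC L B" by (simp add: fC_def)
  then show ?thesis using emeasure_haarC[OF imS] emeasure_haarC[OF B] by simp
qed

lemma haarC_haar: "is_haar_kerT L (haarC L)"
  unfolding is_haar_kerT_def
  using haarC_space1 haarC_inv by (simp add: space_haarC sets_haarC)

lemma haarT_is_haar: "is_haar_kerT L (haarT L)"
  using haarC_haar haarT_eq by metis

end

definition Gp :: "nat \<Rightarrow> ('a \<Rightarrow> int) set" where
  "Gp p = {j. \<forall>i. 0 \<le> j i \<and> j i < int p}"
definition clL :: "int^'m^'r \<Rightarrow> nat \<Rightarrow> ('m \<Rightarrow> int) \<Rightarrow> ('r \<Rightarrow> int)" where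
  "clL L p j = (\<lambda>k. (\<Sum>i\<in>UNIV. L$k$i * j i) mod int p)"
definition jadd :: "nat \<Rightarrow> ('a \<Rightarrow> int) \<Rightarrow> ('a \<Rightarrow> int) \<Rightarrow> ('a \<Rightarrow> int)" where
  "jadd p j x = (\<lambda>i. (j i + x i) mod int p)"

lemma Gp_PiE: "Gp p = PiE UNIV (\<lambda>_. {0..<int p})"
  by (auto simp: Gp_def PiE_UNIV_domain)

lemma card_Gp: "card (Gp p :: ('a::finite \<Rightarrow> int) set) = p ^ CARD('a)"
  by (simp add: Gp_PiE card_PiE)

lemma finite_Gp: "finite (Gp p :: ('a::finite \<Rightarrow> int) set)"
  by (simp add: Gp_PiE finite_PiE)

lemma kerZp_eq: "kerZp L p = {x \<in> Gp p. clL L p x = (\<lambda>_. 0)}"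
  by (auto simp: kerZp_def Gp_def clL_def fun_eq_iff)

lemma kerZp_Gp: "kerZp L p \<subseteq> Gp p" by (auto simp: kerZp_eq)

lemma jadd_Gp: "p > 0 \<Longrightarrow> jadd p j x \<in> Gp p"
  by (auto simp: jadd_def Gp_def)

lemma sum_mod_cong:
  assumes "\<And>i. i \<in> A \<Longrightarrow> f i mod m = g i mod (m::int)"
  shows "(\<Sum>i\<in>A. f i) mod m = (\<Sum>i\<in>A. g i) mod m"
proof -
  have "(\<Sum>i\<in>A. f i) mod m = (\<Sum>i\<in>A. f i mod m) mod m" by (simp add: mod_sum_eq)
  also have "\<dots> = (\<Sum>i\<in>A. g i mod m) mod m" using assms by (simp cong: sum.cong)
  also have "\<dots> = (\<Sum>i\<in>A. g i) mod m" by (simp add: mod_sum_eq)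
  finally show ?thesis .
qed

lemma clL_jadd_raw: "clL L p (jadd p j x) = (\<lambda>k. (\<Sum>i\<in>UNIV. L$k$i * j i + L$k$i * x i) mod int p)"
  unfolding clL_def jadd_def
  by (rule ext, rule sum_mod_cong) (simp add: mod_mult_right_eq distrib_left)

lemma clL_jadd: "x \<in> kerZp L p \<Longrightarrow> clL L p (jadd p j x) = clL L p j"
proof -
  assume x: "x \<in> kerZp L p"
  have "(\<Sum>i\<in>UNIV. L$k$i * j i + L$k$i * x i) mod int p = (\<Sum>i\<in>UNIV. L$k$i * j i) mod int p" for k
  proof -
    have "(\<Sum>i\<in>UNIV. L$k$i * j i + L$k$i * x i) = (\<Sum>i\<in>UNIV. L$k$i * j i) + (\<Sum>i\<in>UNIV. L$k$i * x i)"
      by (simp add: sum.distrib)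
    moreover have "(\<Sum>i\<in>UNIV. L$k$i * x i) mod int p = 0" using x by (simp add: kerZp_def)
    ultimately show ?thesis by (simp add: mod_add_eq[symmetric])
  qed
  then show ?thesis by (subst clL_jadd_raw) (simp add: clL_def)
qed

lemma jadd_Gp_id: "j \<in> Gp p \<Longrightarrow> x \<in> Gp p \<Longrightarrow> jadd p j x = jadd p x j"
  by (simp add: jadd_def add.commute)

lemma fiber_rep:
  assumes j0: "j0 \<in> Gp p" and j: "j \<in> Gp p" and c: "clL L p j = clL L p j0" and p: "p > 0"
  shows "(\<lambda>i. (j i - j0 i) mod int p) \<in> kerZp L p" "jadd p j0 (\<lambda>i. (j i - j0 i) mod int p) = j"
proof -
  let ?x = "\<lambda>i. (j i - j0 i) mod int p"
  show "jadd p j0 ?x = j"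
  proof
    fix i
    have "(j0 i + (j i - j0 i) mod int p) mod int p = (j0 i + (j i - j0 i)) mod int p" by (simp add: mod_add_right_eq)
    also have "\<dots> = j i" using j by (simp add: Gp_def)
    finally show "jadd p j0 ?x i = j i" by (simp add: jadd_def)
  qed
  have "(\<Sum>i\<in>UNIV. L$k$i * ?x i) mod int p = 0" for k
  proof -
    have "(\<Sum>i\<in>UNIV. L$k$i * ?x i) mod int p = (\<Sum>i\<in>UNIV. L$k$i * j i - L$k$i * j0 i) mod int p"
      by (rule sum_mod_cong) (simp add: mod_mult_right_eq right_diff_distrib)
    also have "\<dots> = ((\<Sum>i\<in>UNIV. L$k$i * j i) - (\<Sum>i\<in>UNIV. L$k$i * j0 i)) mod int p"
      by (simp add: sum_subtractf)
    also have "\<dots> = ((\<Sum>i\<in>UNIV. L$k$i * j i) mod int p - (\<Sum>i\<in>UNIV. L$k$i * j0 i) mod int p) mod int p"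
      by (simp add: mod_diff_eq)
    also have "\<dots> = 0" using fun_cong[OF c, of k] by (simp add: clL_def)
    finally show ?thesis .
  qed
  then show "?x \<in> kerZp L p" using p by (simp add: kerZp_def)
qed

lemma jadd_inj: "inj_on (jadd p j0) (Gp p)"
proof (rule inj_onI)
  fix x y assume x: "x \<in> Gp p" and y: "y \<in> Gp p" and e: "jadd p j0 x = jadd p j0 y"
  show "x = y"
  proof
    fix i
    have "(j0 i + x i) mod int p = (j0 i + y i) mod int p" using fun_cong[OF e, of i] by (simp add: jadd_def)
    then have "x i mod int p = y i mod int p" by (metis add_diff_cancel_left' mod_diff_left_eq)
    then show "x i = y i" using x y by (simp add: Gp_def)
  qed
qed

lemma card_kerZp_gen:
  fixes L :: "int^'m^'r"
  assumes p: "p > 0"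
    and surj: "\<And>c. c \<in> Gp p \<Longrightarrow> \<exists>j\<in>Gp p. clL L p j = c"
  shows "card (Gp p :: ('m \<Rightarrow> int) set) = card (Gp p :: ('r \<Rightarrow> int) set) * card (kerZp L p)"
proof -
  let ?F = "\<lambda>c. {j \<in> Gp p. clL L p j = c}"
  have cl_in: "clL L p j \<in> Gp p" for j using p by (auto simp: clL_def Gp_def)
  have e: "(Gp p :: ('m \<Rightarrow> int) set) = (\<Union>c\<in>(Gp p :: ('r \<Rightarrow> int) set). ?F c)" using cl_in by auto
  have "card (Gp p :: ('m \<Rightarrow> int) set) = card (\<Union>c\<in>(Gp p :: ('r \<Rightarrow> int) set). ?F c)"
    using e by (rule arg_cong)
  also have "card (\<Union>c\<in>(Gp p :: ('r \<Rightarrow> int) set). ?F c) = (\<Sum>c\<in>Gp p. card (?F c))"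
    by (rule card_UN_disjoint) (auto simp: finite_Gp)
  also have "\<dots> = (\<Sum>c\<in>(Gp p :: ('r \<Rightarrow> int) set). card (kerZp L p))"
  proof (rule sum.cong[OF refl])
    fix c :: "'r \<Rightarrow> int" assume c: "c \<in> Gp p"
    obtain j0 where j0: "j0 \<in> Gp p" "clL L p j0 = c" using surj[OF c] by blast
    have "?F c = jadd p j0 ` kerZp L p"
    proof (rule set_eqI, rule iffI)
      fix j assume "j \<in> ?F c"
      then have "j \<in> Gp p" "clL L p j = clL L p j0" using j0 by auto
      then show "j \<in> jadd p j0 ` kerZp L p"
        using fiber_rep[OF j0(1), of j L] p by (metis image_eqI)
    next
      fix j assume "j \<in> jadd p j0 ` kerZp L p"
      then obtain x where "x \<in> kerZp L p" "j = jadd p j0 x" by auto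
      then show "j \<in> ?F c"
        using jadd_Gp p clL_jadd j0 by auto
    qed
    also have "card \<dots> = card (kerZp L p)"
      by (rule card_image, rule inj_on_subset[OF jadd_inj kerZp_Gp])
    finally show "card (?F c) = card (kerZp L p)" .
  qed
  also have "\<dots> = card (Gp p :: ('r \<Rightarrow> int) set) * card (kerZp L p)" by simp
  finally show ?thesis .
qed


definition DI :: "int^'m^'r \<Rightarrow> int" where "DI L = \<lfloor>Dt L\<rfloor>"

lemma DI_eq: "real_of_int (DI L) = Dt L"
  using Dt_Ints[of L] by (auto simp: DI_def elim: Ints_cases)

lemma intv_ex: "intv w \<Longrightarrow> w = (\<chi> i. real_of_int \<lfloor>w$i\<rfloor>)"
  by (auto simp: intv_def vec_eq_iff elim!: Ints_cases)

context
  fixes L :: "int^'m^'r"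
  assumes rk: "rank (\<chi> k i. real_of_int (L$k$i)) = CARD('r)"
begin

lemma DI_nz: "DI L \<noteq> 0" using DI_eq[of L] Dt_nz[OF rk] by auto

lemma surj_cl:
  assumes p: "prime p" and nd: "\<not> int p dvd DI L" and c: "c \<in> Gp p"
  shows "\<exists>j\<in>Gp p. clL L p j = c"
proof -
  define cv where "cv = (\<chi> k. real_of_int (c k))"
  have cvi: "intv cv" by (simp add: intv_def cv_def)
  define w where "w = transpose (Ar L) *v (Dt L *\<^sub>R (Bi L *v cv))"
  have wi: "intv w" unfolding w_def by (rule intm_intv[OF intm_transpose[OF intm_Ar] Bi_int[OF rk cvi]])
  have Aw: "Ar L *v w = Dt L *\<^sub>R cv"
    unfolding w_def using Mr_Bi_v[OF rk, of cv]
    by (simp add: matrix_vector_mul_assoc matrix_vector_mult_scaleR Mr_def matrix_mul_assoc del: transpose_matrix_vector)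
  define wI where "wI i = \<lfloor>w$i\<rfloor>" for i
  have wIe: "w$i = real_of_int (wI i)" for i using wi by (auto simp: wI_def intv_def elim!: Ints_cases)
  have sumk: "(\<Sum>i\<in>UNIV. L$k$i * wI i) = DI L * c k" for k
  proof -
    have "real_of_int (\<Sum>i\<in>UNIV. L$k$i * wI i) = (Ar L *v w) $ k"
      by (simp add: matrix_vector_mult_def Ar_def wIe)
    also have "\<dots> = real_of_int (DI L * c k)" by (simp add: Aw cv_def DI_eq)
    finally show ?thesis by linarith
  qed
  have cop: "coprime (int p) (DI L)" using p nd by (intro prime_imp_coprime) auto
  obtain u v where uv: "u * DI L + v * int p = 1" using bezout_int[of "DI L" "int p"] cop
    by (auto simp: coprime_iff_gcd_eq_1 gcd.commute)
  have p1: "int p > 1" using p prime_gt_1_nat by auto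
  define j where "j i = (u * wI i) mod int p" for i
  have jG: "j \<in> Gp p" using p1 by (auto simp: j_def Gp_def)
  have "clL L p j k = c k" for k
  proof -
    have "clL L p j k = (\<Sum>i\<in>UNIV. L$k$i * (u * wI i)) mod int p"
      unfolding clL_def j_def by (rule sum_mod_cong) (simp add: mod_mult_right_eq)
    also have "(\<Sum>i\<in>UNIV. L$k$i * (u * wI i)) = u * (\<Sum>i\<in>UNIV. L$k$i * wI i)"
      by (simp add: sum_distrib_left mult.left_commute)
    also have "\<dots> = u * (DI L * c k)" using sumk[of k] by simp
    also have "u * (DI L * c k) = (1 - v * int p) * c k"
    proof -
      have e: "(u * DI L + v * int p) * c k = c k" using uv by simp
      then show ?thesis by (simp add: algebra_simps)
    qed
    also have "((1 - v * int p) * c k) mod int p = c k mod int p"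
    proof -
      have "(1 - v * int p) * c k = c k + (- v * c k) * int p" by (simp add: algebra_simps)
      then show ?thesis by (simp only: mod_mult_self1)
    qed
    also have "\<dots> = c k" using c by (simp add: Gp_def)
    finally show ?thesis .
  qed
  then show ?thesis using jG by auto
qed

lemma r_le_m: "CARD('r) \<le> CARD('m)"
  using rank_bound[of "(\<chi> k i. real_of_int (L$k$i)) :: real^'m^'r"] rk by simp

lemma card_kerZp:
  assumes p: "prime p" and nd: "\<not> int p dvd DI L"
  shows "card (kerZp L p) = p ^ (CARD('m) - CARD('r))"
proof -
  have p0: "p > 0" using p prime_gt_0_nat by auto
  have "p ^ CARD('m) = p ^ CARD('r) * card (kerZp L p)"
    using card_kerZp_gen[OF p0 surj_cl[OF p nd]] by (simp add: card_Gp)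
  moreover have "p ^ CARD('m) = p ^ CARD('r) * p ^ (CARD('m) - CARD('r))"
    using r_le_m by (simp add: power_add[symmetric])
  ultimately show ?thesis using p0 by simp
qed

end

lemma pbox_borel: "pbox p j \<in> sets (borel :: (real^'m) measure)"
proof -
  have "pbox p j = (\<Inter>i. {x::real^'m. real_of_int (j i) / real p \<le> x$i} \<inter> {x. x$i < real_of_int (j i) / real p + 1 / real p})"
    by (auto simp: pbox_def)
  also have "\<dots> \<in> sets borel" by measurable
  finally show ?thesis .
qed

lemma pbox_iff: "p > 0 \<Longrightarrow> x \<in> pbox p j \<longleftrightarrow> (\<forall>i. \<lfloor>real p * x$i\<rfloor> = j i)"
proof -
  assume p: "p > 0"
  have "real_of_int (j i) / real p \<le> x$i \<and> x$i < real_of_int (j i) / real p + 1 / real p \<longleftrightarrow> \<lfloor>real p * x$i\<rfloor> = j i" for i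
  proof -
    have "real_of_int (j i) / real p \<le> x$i \<longleftrightarrow> real_of_int (j i) \<le> real p * x$i"
      using p by (simp add: divide_le_eq mult.commute)
    moreover have "x$i < real_of_int (j i) / real p + 1 / real p \<longleftrightarrow> real p * x$i < real_of_int (j i) + 1"
      using p by (simp add: add_divide_distrib[symmetric] less_divide_eq mult.commute)
    ultimately show ?thesis by (simp add: floor_eq_iff)
  qed
  then show ?thesis by (simp add: pbox_def)
qed

lemma pbox_torus: "p > 0 \<Longrightarrow> j \<in> Gp p \<Longrightarrow> pbox p j \<subseteq> torus"
proof
  fix x assume p: "p > 0" and j: "j \<in> Gp p" and x: "x \<in> pbox p j"
  have "0 \<le> x$i \<and> x$i < 1" for i
  proof -
    have f: "\<lfloor>real p * x$i\<rfloor> = j i" using pbox_iff[OF p] x by auto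
    have "0 \<le> j i \<and> j i < int p" using j by (simp add: Gp_def)
    then have "0 \<le> j i" "j i + 1 \<le> int p" by auto
    then have "0 \<le> real p * x$i" "real p * x$i < real p" using f by linarith+
    then show ?thesis using p by (simp add: zero_le_mult_iff)
  qed
  then show "x \<in> torus" by (simp add: in_torus)
qed

lemma torus_pbox: "p > 0 \<Longrightarrow> x \<in> torus \<Longrightarrow> x \<in> pbox p (\<lambda>i. \<lfloor>real p * x$i\<rfloor>) \<and> (\<lambda>i. \<lfloor>real p * x$i\<rfloor>) \<in> Gp p"
proof -
  assume p: "p > 0" and x: "x \<in> torus"
  have "0 \<le> \<lfloor>real p * x$i\<rfloor> \<and> \<lfloor>real p * x$i\<rfloor> < int p" for i
  proof -
    have "0 \<le> x$i" "x$i < 1" using x by (auto simp: in_torus)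
    then have "0 \<le> real p * x$i" "real p * x$i < real p" using p by auto
    then show ?thesis by linarith
  qed
  then show ?thesis using pbox_iff[OF p] by (auto simp: Gp_def)
qed

lemma pmeas_iff:
  assumes A: "p_measurable p A" and p: "p > 0" and y: "0 \<le> y" "y < 1"
  shows "y \<in> A \<longleftrightarrow> real_of_int \<lfloor>real p * y\<rfloor> / real p \<in> A"
proof -
  obtain X where X: "X \<subseteq> {1..p}" "A = (\<Union>x\<in>X. {real (x - 1) / real p ..< real x / real p})"
    using A by (auto simp: p_measurable_def)
  have mem: "z \<in> {real (x - 1) / real p ..< real x / real p} \<longleftrightarrow> \<lfloor>real p * z\<rfloor> = int x - 1" if "x \<ge> 1" for z x
  proof -
    have "real (x - 1) = real x - 1" using that by simp
    then have "z \<in> {real (x - 1) / real p ..< real x / real p} \<longleftrightarrow> real x - 1 \<le> real p * z \<and> real p * z < real x"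
      using p by (simp add: divide_le_eq less_divide_eq mult.commute)
    then show ?thesis by (simp add: floor_eq_iff)
  qed
  let ?I = "\<lambda>x. {real (x - 1) / real p ..< real x / real p}"
  have fl: "\<lfloor>real p * (real_of_int \<lfloor>real p * y\<rfloor> / real p)\<rfloor> = \<lfloor>real p * y\<rfloor>" using p by simp
  have "y \<in> A \<longleftrightarrow> (\<exists>x\<in>X. y \<in> ?I x)" using X(2) by blast
  also have "\<dots> \<longleftrightarrow> (\<exists>x\<in>X. \<lfloor>real p * y\<rfloor> = int x - 1)"
  proof (rule bex_cong[OF refl])
    fix x assume "x \<in> X"
    then have "x \<ge> 1" using X(1) by auto
    then show "y \<in> ?I x \<longleftrightarrow> \<lfloor>real p * y\<rfloor> = int x - 1" by (rule mem)
  qed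
  also have "\<dots> \<longleftrightarrow> (\<exists>x\<in>X. real_of_int \<lfloor>real p * y\<rfloor> / real p \<in> ?I x)"
  proof (rule bex_cong[OF refl])
    fix x assume "x \<in> X"
    then have "x \<ge> 1" using X(1) by auto
    from mem[OF this, of "real_of_int \<lfloor>real p * y\<rfloor> / real p"]
    show "\<lfloor>real p * y\<rfloor> = int x - 1 \<longleftrightarrow> real_of_int \<lfloor>real p * y\<rfloor> / real p \<in> ?I x"
      by (simp only: fl)
  qed
  also have "\<dots> \<longleftrightarrow> real_of_int \<lfloor>real p * y\<rfloor> / real p \<in> A" using X(2) by blast
  finally show ?thesis .
qed

lemma frac_shift_lemma:
  fixes p :: nat and ji xi :: int and s :: real
  assumes p: "p > 0" and s: "0 \<le> s" "s < 1 / real p"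
  shows "frac (real_of_int xi / real p + (real_of_int ji / real p + s)) = real_of_int ((ji + xi) mod int p) / real p + s"
proof -
  let ?n = "ji + xi"
  have n: "?n = (?n div int p) * int p + ?n mod int p" by simp
  have lt0: "?n mod int p < int p" by (rule pos_mod_bound) (use p in simp)
  have r: "0 \<le> ?n mod int p" "?n mod int p + 1 \<le> int p" using p apply simp using lt0 by linarith
  have e: "real_of_int xi / real p + (real_of_int ji / real p + s) = real_of_int (?n div int p) + (real_of_int (?n mod int p) / real p + s)"
  proof -
    have "real_of_int ?n = real_of_int (?n div int p * int p + ?n mod int p)" by (simp only: div_mult_mod_eq)
    then have "real_of_int ?n = real_of_int (?n div int p) * real p + real_of_int (?n mod int p)"
      by (simp only: of_int_add of_int_mult of_int_of_nat_eq)
    then show ?thesis using p by (simp add: field_simps)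
  qed
  have lt: "real_of_int (?n mod int p) / real p + s < 1"
  proof -
    have "real_of_int (?n mod int p) + 1 \<le> real p" using r by linarith
    then have "real_of_int (?n mod int p) / real p + 1 / real p \<le> 1" using p by (simp add: field_simps)
    then show ?thesis using s by linarith
  qed
  have ge: "0 \<le> real_of_int (?n mod int p) / real p + s" using r s by simp
  show ?thesis unfolding e using lt ge by (simp add: frac_unique_iff)
qed

definition avec :: "nat \<Rightarrow> ('m \<Rightarrow> int) \<Rightarrow> real^'m" where
  "avec p x = vfrac (\<chi> i. real_of_int (x i) / real p)"

lemma pbox_shift:
  assumes p: "p > 0" and y: "y \<in> pbox p j"
  shows "tadd (avec p x) y \<in> pbox p (jadd p j x)"
proof -
  have "real_of_int (jadd p j x i) / real p \<le> tadd (avec p x) y $ i \<and>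
        tadd (avec p x) y $ i < real_of_int (jadd p j x i) / real p + 1 / real p" for i
  proof -
    define s where "s = y$i - real_of_int (j i) / real p"
    have "real_of_int (j i) / real p \<le> y$i \<and> y$i < real_of_int (j i) / real p + 1 / real p"
      using y by (simp add: pbox_def)
    then have s: "0 \<le> s" "s < 1 / real p" by (auto simp: s_def)
    have "tadd (avec p x) y $ i = frac (real_of_int (x i) / real p + (real_of_int (j i) / real p + s))"
      by (simp add: tadd_nth avec_def vfrac_nth frac_frac_add s_def)
    also have "\<dots> = real_of_int (jadd p j x i) / real p + s"
      using frac_shift_lemma[OF p s] by (simp add: jadd_def)
    finally show ?thesis using s by simp
  qed
  then show ?thesis by (simp add: pbox_def)
qed

lemma jadd_neg: "j \<in> Gp p \<Longrightarrow> jadd p (jadd p j x) (\<lambda>i. - x i) = j"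
proof
  fix i assume j: "j \<in> Gp p"
  have "((j i + x i) mod int p + - x i) mod int p = ((j i + x i) + - x i) mod int p" by (simp add: mod_diff_left_eq)
  also have "\<dots> = j i" using j by (simp add: Gp_def)
  finally show "jadd p (jadd p j x) (\<lambda>i. - x i) i = j i" by (simp add: jadd_def)
qed

lemma tneg_avec: "tneg (avec p x) = avec p (\<lambda>i. - x i)"
proof -
  have e: "(\<chi> i. real_of_int (- x i) / real p) = - (\<chi> i. real_of_int (x i) / real p)"
    by (simp add: vec_eq_iff)
  have "veq (- vfrac (\<chi> i. real_of_int (x i) / real p)) (- (\<chi> i. real_of_int (x i) / real p))"
    using veq_diff[OF veq_refl[of 0] veq_vfrac[of "\<chi> i. real_of_int (x i) / real p"]]
    by simp
  then have "veq (- vfrac (\<chi> i. real_of_int (x i) / real p)) (\<chi> i. real_of_int (- x i) / real p)"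
    by (simp only: e)
  then show ?thesis unfolding avec_def tneg_vfrac veq_vfrac_iff .
qed

lemma avec_kerT: fixes L :: "int^'m^'r" and x :: "'m \<Rightarrow> int" shows "p > 0 \<Longrightarrow> x \<in> kerZp L p \<Longrightarrow> avec p x \<in> kerT L"
proof -
  assume p: "p > 0" and x: "x \<in> kerZp L p"
  let ?v = "(\<chi> i. real_of_int (x i) / real p) :: real^'m"
  have "intv (Ar L *v ?v)"
  proof (unfold intv_def, rule allI)
    fix k
    have "int p dvd (\<Sum>i\<in>UNIV. L$k$i * x i)" using x by (simp add: kerZp_def mod_eq_0_iff_dvd)
    then obtain q where q: "(\<Sum>i\<in>UNIV. L$k$i * x i) = int p * q" by (auto simp: dvd_def)
    have "(Ar L *v ?v) $ k = real_of_int (\<Sum>i\<in>UNIV. L$k$i * x i) / real p"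
      by (simp add: matrix_vector_mult_def Ar_def sum_divide_distrib)
    also have "\<dots> = real_of_int q" using q p by simp
    finally show "(Ar L *v ?v) $ k \<in> \<int>" by simp
  qed
  moreover have "veq (Ar L *v avec p x) (Ar L *v ?v)"
    unfolding avec_def by (rule veq_intm[OF intm_Ar veq_vfrac])
  ultimately show ?thesis unfolding kerT_Ar avec_def using veq_intv by auto
qed


definition Bd :: "int^'m^'r \<Rightarrow> int" where "Bd L = (\<Sum>k\<in>UNIV. \<Sum>i\<in>UNIV. \<bar>L$k$i\<bar>)"
definition VB :: "int^'m^'r \<Rightarrow> ('r \<Rightarrow> int) set" where "VB L = {v. \<forall>k. \<bar>v k\<bar> \<le> Bd L}"

lemma VB_finite: "finite (VB L)"
proof -
  have "VB L \<subseteq> PiE UNIV (\<lambda>_. {-Bd L..Bd L})"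
  proof
    fix v assume "v \<in> VB L"
    then have "\<bar>v k\<bar> \<le> Bd L" for k by (simp add: VB_def)
    then have "v k \<in> {-Bd L..Bd L}" for k
    proof -
      have a: "\<bar>v k\<bar> \<le> Bd L" by fact
      show ?thesis unfolding atLeastAtMost_iff using a by arith
    qed
    then show "v \<in> PiE UNIV (\<lambda>_. {-Bd L..Bd L})" by (simp add: PiE_UNIV_domain)
  qed
  then show ?thesis by (rule finite_subset) (simp add: finite_PiE)
qed

lemma VB_ne: "(\<lambda>_. 0) \<in> VB L"
  by (auto simp: VB_def Bd_def intro!: sum_nonneg)

lemma bound_cl:
  fixes L :: "int^'m^'r"
  assumes p: "p > 0" and y: "y \<in> pbox p j" "y \<in> kerT L"
  shows "clL L p j \<in> (\<lambda>v k. v k mod int p) ` VB L"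
proof -
  have fl: "\<lfloor>real p * y$i\<rfloor> = j i" for i using pbox_iff[OF p] y(1) by auto
  have d: "\<bar>real_of_int (j i) - real p * y$i\<bar> \<le> 1" for i
    using fl[of i] by linarith
  define N where "N k = \<lfloor>\<Sum>i\<in>UNIV. real_of_int (L$k$i) * y$i\<rfloor>" for k
  have Ne: "real_of_int (N k) = (\<Sum>i\<in>UNIV. real_of_int (L$k$i) * y$i)" for k
    using y(2) unfolding kerT_def N_def by (auto elim!: Ints_cases)
  define v where "v k = (\<Sum>i\<in>UNIV. L$k$i * j i) - int p * N k" for k
  have vb: "\<bar>v k\<bar> \<le> Bd L" for k
  proof -
    have "real_of_int (v k) = (\<Sum>i\<in>UNIV. real_of_int (L$k$i) * (real_of_int (j i) - real p * y$i))"
      by (simp add: v_def Ne sum_subtractf right_diff_distrib sum_distrib_left mult.left_commute)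
    then have "\<bar>real_of_int (v k)\<bar> \<le> (\<Sum>i\<in>UNIV. \<bar>real_of_int (L$k$i) * (real_of_int (j i) - real p * y$i)\<bar>)"
      by (simp only: sum_abs)
    also have "\<dots> \<le> (\<Sum>i\<in>UNIV. real_of_int \<bar>L$k$i\<bar>)"
      by (rule sum_mono) (simp add: abs_mult mult_left_le d)
    also have "\<dots> = real_of_int (\<Sum>i\<in>UNIV. \<bar>L$k$i\<bar>)" by simp
    finally have "\<bar>v k\<bar> \<le> (\<Sum>i\<in>UNIV. \<bar>L$k$i\<bar>)" by linarith
    also have "\<dots> \<le> Bd L" unfolding Bd_def
      by (rule member_le_sum[where f = "\<lambda>k. \<Sum>i\<in>UNIV. \<bar>L$k$i\<bar>"]) (auto intro: sum_nonneg)
    finally show ?thesis .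
  qed
  have "clL L p j = (\<lambda>k. v k mod int p)"
  proof
    fix k
    have "v k = (\<Sum>i\<in>UNIV. L$k$i * j i) + (- N k) * int p" by (simp add: v_def)
    then show "clL L p j k = v k mod int p" by (simp only: clL_def mod_mult_self1)
  qed
  then show ?thesis using vb by (auto simp: VB_def)
qed

definition GA :: "nat \<Rightarrow> ('m \<Rightarrow> real set) \<Rightarrow> ('m \<Rightarrow> int) set" where
  "GA p A = {j \<in> Gp p. \<forall>i. j i \<in> prime_set p (A i)}"

context
  fixes L :: "int^'m^'r"
  assumes rk: "rank (\<chi> k i. real_of_int (L$k$i)) = CARD('r)"
begin

lemma H: "is_haar_kerT L (haarT L)" by (rule haarT_is_haar[OF rk])

lemma sets_H: "S \<in> sets (haarT L) \<longleftrightarrow> S \<subseteq> kerT L \<and> S \<in> sets borel"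
  using H sets_haar by (auto simp: is_haar_kerT_def)

lemma pk_sets: "pbox p j \<inter> kerT L \<in> sets (haarT L)"
  using sets_H pbox_borel kerT_borel by blast

lemma mu_shift:
  assumes p: "p > 0" and j: "j \<in> Gp p" and x: "x \<in> kerZp L p"
  shows "muT L (pbox p (jadd p j x)) = muT L (pbox p j)"
proof -
  let ?a = "avec p x"
  have a: "?a \<in> kerT L" by (rule avec_kerT[OF p x])
  have j': "jadd p j x \<in> Gp p" using jadd_Gp[OF p] .
  have img: "tadd ?a ` (pbox p j \<inter> kerT L) = pbox p (jadd p j x) \<inter> kerT L"
  proof safe
    fix y assume "y \<in> pbox p j" "y \<in> kerT L"
    then show "tadd ?a y \<in> pbox p (jadd p j x)" "tadd ?a y \<in> kerT L"
      using pbox_shift[OF p] tadd_kerT[OF a] by auto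
  next
    fix z assume z: "z \<in> pbox p (jadd p j x)" "z \<in> kerT L"
    let ?y = "tadd (tneg ?a) z"
    have "?y \<in> pbox p (jadd p (jadd p j x) (\<lambda>i. - x i))"
      unfolding tneg_avec by (rule pbox_shift[OF p z(1)])
    then have y1: "?y \<in> pbox p j" using jadd_neg[OF j] by simp
    have y2: "?y \<in> kerT L" using tadd_kerT[OF tneg_kerT[OF a] z(2)] .
    have "z \<in> torus" using z(2) kerT_torus by blast
    then have "z = tadd ?a ?y" using tadd_tneg[of z ?a] by simp
    then show "z \<in> tadd ?a ` (pbox p j \<inter> kerT L)" using y1 y2 by blast
  qed
  have "emeasure (haarT L) (tadd ?a ` (pbox p j \<inter> kerT L)) = emeasure (haarT L) (pbox p j \<inter> kerT L)"
    using H a pk_sets by (auto simp: is_haar_kerT_def)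
  then show ?thesis unfolding muT_def img by (simp add: measure_def)
qed


lemma ST_decomp:
  assumes p: "p > 0" and A: "\<forall>i. p_measurable p (A i)"
  shows "S_T L A = (\<Sum>j\<in>GA p A. muT L (pbox p j))"
proof -
  interpret finite_measure "haarT L" by (rule haar_fin[OF H])
  have eq: "{x. \<forall>i. x$i \<in> A i} \<inter> kerT L = (\<Union>j\<in>GA p A. pbox p j \<inter> kerT L)"
  proof safe
    fix x assume x: "\<forall>i. x$i \<in> A i" "x \<in> kerT L"
    have xt: "x \<in> torus" using x(2) kerT_torus by auto
    let ?j = "\<lambda>i. \<lfloor>real p * x$i\<rfloor>"
    have j: "x \<in> pbox p ?j" "?j \<in> Gp p" using torus_pbox[OF p xt] by auto
    have "?j \<in> GA p A"
    proof -
      have "?j i \<in> prime_set p (A i)" for i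
      proof -
        have "0 \<le> x$i" "x$i < 1" using xt by (auto simp: in_torus)
        then have "real_of_int (?j i) / real p \<in> A i" using pmeas_iff[OF A[rule_format] p] x(1) by blast
        then show ?thesis using j(2) by (auto simp: prime_set_def Gp_def)
      qed
      then show ?thesis using j(2) by (simp add: GA_def)
    qed
    then show "x \<in> (\<Union>j\<in>GA p A. pbox p j \<inter> kerT L)" using j x by auto
  next
    fix x j i assume j: "j \<in> GA p A" and x: "x \<in> pbox p j" "x \<in> kerT L"
    have xt: "x \<in> torus" using x(2) kerT_torus by auto
    have "0 \<le> x$i" "x$i < 1" using xt by (auto simp: in_torus)
    moreover have "\<lfloor>real p * x$i\<rfloor> = j i" using pbox_iff[OF p] x(1) by auto
    moreover have "real_of_int (j i) / real p \<in> A i" using j by (auto simp: GA_def prime_set_def)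
    ultimately show "x$i \<in> A i" using pmeas_iff[OF A[rule_format] p] by auto
  qed
  have fin: "finite (GA p A)" using finite_Gp by (rule finite_subset[rotated]) (auto simp: GA_def)
  have disj: "disjoint_family_on (\<lambda>j. pbox p j \<inter> kerT L) (GA p A)"
    unfolding disjoint_family_on_def
  proof (intro ballI impI)
    fix j1 j2 :: "'m \<Rightarrow> int" assume "j1 \<noteq> j2"
    then obtain i where "j1 i \<noteq> j2 i" by auto
    then show "(pbox p j1 \<inter> kerT L) \<inter> (pbox p j2 \<inter> kerT L) = {}"
      using pbox_iff[OF p, of _ j1] pbox_iff[OF p, of _ j2] by auto
  qed
  have "S_T L A = measure (haarT L) (\<Union>j\<in>GA p A. pbox p j \<inter> kerT L)"
    by (simp add: S_T_def muT_def eq)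
  also have "\<dots> = (\<Sum>j\<in>GA p A. measure (haarT L) (pbox p j \<inter> kerT L))"
    by (rule finite_measure_finite_Union[OF fin _ disj]) (auto intro: pk_sets)
  also have "\<dots> = (\<Sum>j\<in>GA p A. muT L (pbox p j))" by (simp add: muT_def)
  finally show ?thesis .
qed

end

definition Kset :: "int^'m^'r \<Rightarrow> nat \<Rightarrow> ('m \<Rightarrow> real set) \<Rightarrow> ('m \<Rightarrow> int) \<Rightarrow> ('m \<Rightarrow> int) set" where
  "Kset L p A j0 = kerZp L p \<inter> {x. \<forall>i. x i \<in> shiftZ p (prime_set p (A i)) (j0 i)}"

context
  fixes L :: "int^'m^'r"
  assumes rk: "rank (\<chi> k i. real_of_int (L$k$i)) = CARD('r)"
begin

lemma fiber_eq:
  assumes p: "p > 0" and j0: "j0 \<in> Jset L p"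
  shows "{j \<in> GA p A \<inter> Jset L p. clL L p j = clL L p j0} = jadd p j0 ` Kset L p A j0"
proof (rule set_eqI, rule iffI)
  have j0G: "j0 \<in> Gp p" using j0 by (simp add: Jset_def Gp_def)
  fix j assume "j \<in> {j \<in> GA p A \<inter> Jset L p. clL L p j = clL L p j0}"
  then have j: "j \<in> GA p A" "clL L p j = clL L p j0" by auto
  have jG: "j \<in> Gp p" using j(1) by (simp add: GA_def)
  let ?x = "\<lambda>i. (j i - j0 i) mod int p"
  have xk: "?x \<in> kerZp L p" and xj: "jadd p j0 ?x = j" using fiber_rep[OF j0G jG j(2) p] by auto
  have "?x i \<in> shiftZ p (prime_set p (A i)) (j0 i)" for i
  proof -
    have "(?x i + j0 i) mod int p = j i" using fun_cong[OF xj, of i] by (simp add: jadd_def add.commute)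
    moreover have "j i \<in> prime_set p (A i)" using j(1) by (simp add: GA_def)
    moreover have "0 \<le> ?x i" "?x i < int p" using p by auto
    ultimately show ?thesis by (simp add: shiftZ_def)
  qed
  then have "?x \<in> Kset L p A j0" using xk by (simp add: Kset_def)
  then show "j \<in> jadd p j0 ` Kset L p A j0" using xj by (metis image_eqI)
next
  have j0G: "j0 \<in> Gp p" using j0 by (simp add: Jset_def Gp_def)
  fix j assume "j \<in> jadd p j0 ` Kset L p A j0"
  then obtain x where x: "x \<in> Kset L p A j0" "j = jadd p j0 x" by auto
  have xk: "x \<in> kerZp L p" using x(1) by (simp add: Kset_def)
  have jG: "j \<in> Gp p" using x(2) jadd_Gp[OF p] by simp
  have "j i \<in> prime_set p (A i)" for i
  proof -
    have "x i \<in> shiftZ p (prime_set p (A i)) (j0 i)" using x(1) by (simp add: Kset_def)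
    then have "(x i + j0 i) mod int p \<in> prime_set p (A i)" by (simp add: shiftZ_def)
    then show ?thesis using x(2) by (simp add: jadd_def add.commute)
  qed
  then have jGA: "j \<in> GA p A" using jG by (simp add: GA_def)
  have "muT L (pbox p j) = muT L (pbox p j0)" using mu_shift[OF rk p j0G xk] x(2) by simp
  then have "j \<in> Jset L p" using j0 jG by (simp add: Jset_def Gp_def)
  moreover have "clL L p j = clL L p j0" using clL_jadd[OF xk] x(2) by simp
  ultimately show "j \<in> {j \<in> GA p A \<inter> Jset L p. clL L p j = clL L p j0}" using jGA by auto
qed

lemma inner_sum:
  assumes p: "p > 0" and j0: "j0 \<in> Jset L p"
  shows "(\<Sum>j\<in>{j \<in> GA p A \<inter> Jset L p. clL L p j = clL L p j0}. muT L (pbox p j))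
         = real (card (Kset L p A j0)) * muT L (pbox p j0)"
proof -
  have j0G: "j0 \<in> Gp p" using j0 by (simp add: Jset_def Gp_def)
  have inj: "inj_on (jadd p j0) (Kset L p A j0)"
    by (rule inj_on_subset[OF jadd_inj]) (use kerZp_Gp in \<open>auto simp: Kset_def\<close>)
  have "(\<Sum>j\<in>{j \<in> GA p A \<inter> Jset L p. clL L p j = clL L p j0}. muT L (pbox p j))
        = (\<Sum>x\<in>Kset L p A j0. muT L (pbox p (jadd p j0 x)))"
    unfolding fiber_eq[OF p j0] by (rule sum.reindex[OF inj, unfolded comp_def])
  also have "\<dots> = (\<Sum>x\<in>Kset L p A j0. muT L (pbox p j0))"
    by (rule sum.cong[OF refl]) (rule mu_shift[OF rk p j0G], simp add: Kset_def)
  also have "\<dots> = real (card (Kset L p A j0)) * muT L (pbox p j0)" by simp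
  finally show ?thesis .
qed

lemma main_p:
  assumes p: "prime p" and nd: "\<not> int p dvd DI L" and A: "\<forall>i. p_measurable p (A i)"
  shows "\<exists>Js. finite Js \<and> Js \<subseteq> Jset L p \<and> card Js \<le> card (VB L) \<and>
           S_T L A = (\<Sum>j\<in>Js. lam L p j * S_Zp L p (\<lambda>i. shiftZ p (prime_set p (A i)) (j i)))"
proof -
  have p0: "p > 0" using p prime_gt_0_nat by auto
  define Jp where "Jp = Jset L p"
  have JpG: "Jp \<subseteq> Gp p" by (auto simp: Jp_def Jset_def Gp_def)
  have finJp: "finite Jp" using finite_Gp JpG by (rule finite_subset[rotated])
  define cls where "cls = clL L p ` Jp"
  define rep where "rep c = (SOME j. j \<in> Jp \<and> clL L p j = c)" for c
  have rep: "rep c \<in> Jp \<and> clL L p (rep c) = c" if cc: "c \<in> cls" for c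
  proof -
    obtain j where "j \<in> Jp" "clL L p j = c" using cc by (auto simp: cls_def)
    then have "j \<in> Jp \<and> clL L p j = c" by simp
    then show ?thesis unfolding rep_def by (rule someI[where P = "\<lambda>j. j \<in> Jp \<and> clL L p j = c"])
  qed
  define Js where "Js = rep ` cls"
  have JsJ: "Js \<subseteq> Jset L p" using rep by (auto simp: Js_def Jp_def)
  have finJs: "finite Js" unfolding Js_def cls_def using finJp by simp
  have clsVB: "cls \<subseteq> (\<lambda>v k. v k mod int p) ` VB L"
  proof
    fix c assume "c \<in> cls"
    then obtain j where j: "j \<in> Jp" "c = clL L p j" by (auto simp: cls_def)
    have "muT L (pbox p j) > 0" using j(1) by (simp add: Jp_def Jset_def)
    then have "pbox p j \<inter> kerT L \<noteq> {}" by (auto simp: muT_def)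
    then obtain y where "y \<in> pbox p j" "y \<in> kerT L" by auto
    then show "c \<in> (\<lambda>v k. v k mod int p) ` VB L" using bound_cl[OF p0] j(2) by blast
  qed
  have cardJs: "card Js \<le> card (VB L)"
  proof -
    have "card Js \<le> card cls" unfolding Js_def by (rule card_image_le) (simp add: cls_def finJp)
    also have "\<dots> \<le> card ((\<lambda>v k. v k mod int p) ` VB L)"
      by (rule card_mono[OF _ clsVB]) (simp add: VB_finite)
    also have "\<dots> \<le> card (VB L)" by (rule card_image_le[OF VB_finite])
    finally show ?thesis .
  qed
  have repinj: "inj_on rep cls" by (rule inj_onI) (metis rep)
  have cardK: "card (kerZp L p) = p ^ (CARD('m) - CARD('r))" by (rule card_kerZp[OF rk p nd])
  have finGA: "finite (GA p A)" using finite_Gp by (rule finite_subset[rotated]) (auto simp: GA_def)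
  have "S_T L A = (\<Sum>j\<in>GA p A. muT L (pbox p j))" by (rule ST_decomp[OF rk p0 A])
  also have "\<dots> = (\<Sum>j\<in>GA p A \<inter> Jp. muT L (pbox p j))"
  proof (rule sum.mono_neutral_right[OF finGA])
    show "GA p A \<inter> Jp \<subseteq> GA p A" by auto
    show "\<forall>j\<in>GA p A - GA p A \<inter> Jp. muT L (pbox p j) = 0"
    proof
      fix j assume j: "j \<in> GA p A - GA p A \<inter> Jp"
      then have "j \<in> Gp p" "j \<notin> Jset L p" by (auto simp: GA_def Jp_def)
      then have "\<not> muT L (pbox p j) > 0" by (auto simp: Jset_def Gp_def)
      moreover have "muT L (pbox p j) \<ge> 0" by (simp add: muT_def)
      ultimately show "muT L (pbox p j) = 0" by simp
    qed
  qed
  also have "\<dots> = (\<Sum>c\<in>cls. \<Sum>j\<in>{j \<in> GA p A \<inter> Jp. clL L p j = c}. muT L (pbox p j))"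
    by (rule sum.group[symmetric]) (auto simp: cls_def finGA finJp)
  also have "\<dots> = (\<Sum>c\<in>cls. real (card (Kset L p A (rep c))) * muT L (pbox p (rep c)))"
  proof (rule sum.cong[OF refl])
    fix c assume c: "c \<in> cls"
    have r: "rep c \<in> Jset L p" "clL L p (rep c) = c" using rep[OF c] by (auto simp: Jp_def)
    show "(\<Sum>j\<in>{j \<in> GA p A \<inter> Jp. clL L p j = c}. muT L (pbox p j)) = real (card (Kset L p A (rep c))) * muT L (pbox p (rep c))"
      using inner_sum[OF p0 r(1), of A] r(2) by (simp add: Jp_def)
  qed
  also have "\<dots> = (\<Sum>j\<in>Js. real (card (Kset L p A j)) * muT L (pbox p j))"
    unfolding Js_def by (rule sum.reindex[OF repinj, symmetric, unfolded comp_def])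
  also have "\<dots> = (\<Sum>j\<in>Js. lam L p j * S_Zp L p (\<lambda>i. shiftZ p (prime_set p (A i)) (j i)))"
  proof (rule sum.cong[OF refl])
    fix j
    have pp: "real p ^ (CARD('m) - CARD('r)) \<noteq> 0" using p0 by simp
    show "real (card (Kset L p A j)) * muT L (pbox p j) = lam L p j * S_Zp L p (\<lambda>i. shiftZ p (prime_set p (A i)) (j i))"
      unfolding lam_def S_Zp_def cardK Kset_def using pp p0 by (simp add: field_simps)
  qed
  finally show ?thesis using finJs JsJ cardJs by blast
qed

end

theorem lemma2p5:
  fixes L :: "int^'m^'r"
  assumes "rank (\<chi> k i. real_of_int (L$k$i)) = CARD('r)"
  shows "\<exists>KL::nat. KL > 0 \<and> (\<exists>p0::nat. \<forall>p. prime p \<and> p \<ge> p0 \<longrightarrow>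
           (\<forall>A :: 'm \<Rightarrow> real set. (\<forall>i. p_measurable p (A i)) \<longrightarrow>
              (\<exists>Js. finite Js \<and> Js \<subseteq> Jset L p \<and> card Js \<le> KL \<and>
                 S_T L A = (\<Sum>j\<in>Js. lam L p j * S_Zp L p (\<lambda>i. shiftZ p (prime_set p (A i)) (j i))))))"
proof (rule exI[of _ "card (VB L)"], rule conjI)
  show "card (VB L) > 0" using VB_finite VB_ne card_gt_0_iff by blast
  show "\<exists>p0::nat. \<forall>p. prime p \<and> p \<ge> p0 \<longrightarrow>
           (\<forall>A :: 'm \<Rightarrow> real set. (\<forall>i. p_measurable p (A i)) \<longrightarrow>
              (\<exists>Js. finite Js \<and> Js \<subseteq> Jset L p \<and> card Js \<le> card (VB L) \<and>
                 S_T L A = (\<Sum>j\<in>Js. lam L p j * S_Zp L p (\<lambda>i. shiftZ p (prime_set p (A i)) (j i)))))"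
  proof (rule exI[of _ "nat \<bar>DI L\<bar> + 1"], intro allI impI)
    fix p :: nat and A :: "'m \<Rightarrow> real set"
    assume p: "prime p \<and> nat \<bar>DI L\<bar> + 1 \<le> p" and A: "\<forall>i. p_measurable p (A i)"
    have nd: "\<not> int p dvd DI L"
    proof
      assume "int p dvd DI L"
      then have "\<bar>int p\<bar> \<le> \<bar>DI L\<bar>" using DI_nz[OF assms] by (rule dvd_imp_le_int[rotated])
      then show False using p by linarith
    qed
    show "\<exists>Js. finite Js \<and> Js \<subseteq> Jset L p \<and> card Js \<le> card (VB L) \<and>
                 S_T L A = (\<Sum>j\<in>Js. lam L p j * S_Zp L p (\<lambda>i. shiftZ p (prime_set p (A i)) (j i)))"
      using main_p[OF assms _ nd A] p by blast
  qed
qed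


end
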